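(* Let $(G_n)$ be a sequence of graphs with $\min_{v\in V}\delta_v=\omega(\log n)$, let $k\ge3$ be odd and $0\le p<p_k^\star$, and run the $(k,p,\mathcal B)$-Edge-Majority dynamics from the configuration in which every node is $\mathcal R$. Then for every constant $\gamma>0$ there exists a constant $T=T(p,k,\gamma)$ such that for every $K>0$, $$\Pr\Big(\forall t\in[0,T):\ \tfrac{\mathrm{vol}(R^{(t)})}{\mathrm{vol}(V)}\ge\varphi^+_{p,k}-\gamma,\ \text{ and }\ \forall t\in[T,n^K]:\ \tfrac{\mathrm{vol}(R^{(t)})}{\mathrm{vol}(V)}\in[\varphi^+_{p,k}-\gamma,\varphi^+_{p,k}+\gamma]\Big)=1-o(1).$$
   Context: $G_n=(V,E)$, $V=\{1,\dots,n\}$, $N(u)$ neighbourhood, $\delta_u=|N(u)|$, $\mathrm{vol}(S)=\sum_{v\in S}\delta_v$; asymptotics as $n\to\infty$. States in $\{\mathcal R,\mathcal B\}$; $R^{(t)}$ is the set of $\mathcal R$ nodes at round $t$. $(k,p,\mathcal B)$-Edge-Majority: in each round $t\ge1$ every node $u$ independently samples $k$ neighbours uniformly with replacement; for each sampled $v$, independently, $u$ sees $v$ as $\mathcal B$ with probability $p$ and otherwise sees $v$'s true state at round $t-1$; $u$ adopts the state seen more often. $F_{p,k}(x)=\Pr[\mathrm{Bin}(k,(1-p)x)\ge(k+1)/2]$. $p_k^\star\in[1/9,1/2)$ is the (unique) value such that for $0\le p<p_k^\star$, $F_{p,k}(x)=x$ on $[0,1]$ has exactly three solutions $0<\varphi^-_{p,k}<\varphi^+_{p,k}$,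 for $p=p_k^\star$ exactly two, and for $p>p_k^\star$ only $0$. *)

theory Defs
  imports "HOL-Probability.Probability" "HOL-Library.Landau_Symbols"
begin

definition is_graph :: "nat \<Rightarrow> (nat \<Rightarrow> nat set) \<Rightarrow> bool" where
  "is_graph n N \<longleftrightarrow> (\<forall>u\<in>{1..n}. N u \<subseteq> {1..n} \<and> u \<notin> N u \<and> (\<forall>v\<in>N u. u \<in> N v))"

definition degree :: "(nat \<Rightarrow> nat set) \<Rightarrow> nat \<Rightarrow> nat" where
  "degree N u = card (N u)"

definition min_degree :: "nat \<Rightarrow> (nat \<Rightarrow> nat set) \<Rightarrow> nat" where
  "min_degree n N = Min (degree N ` {1..n})"

definition vol :: "(nat \<Rightarrow> nat set) \<Rightarrow> nat set \<Rightarrow> real" where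
  "vol N S = (\<Sum>v\<in>S. real (degree N v))"

text \<open>One sample of node u: a uniformly random neighbour v, seen as B with probability p,
  otherwise seen with its true state. Result: True iff the sample is seen as R.\<close>
definition sample_seen_R :: "(nat \<Rightarrow> nat set) \<Rightarrow> real \<Rightarrow> nat set \<Rightarrow> nat \<Rightarrow> bool pmf" where
  "sample_seen_R N p R u =
     do { v \<leftarrow> pmf_of_set (N u); c \<leftarrow> bernoulli_pmf p; return_pmf (\<not> c \<and> v \<in> R) }"

definition node_update :: "(nat \<Rightarrow> nat set) \<Rightarrow> nat \<Rightarrow> real \<Rightarrow> nat set \<Rightarrow> nat \<Rightarrow> bool pmf" where
  "node_update N k p R u =
     map_pmf (\<lambda>f. card {i\<in>{..<k}. f i} > card {i\<in>{..<k}. \<not> f i})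
       (Pi_pmf {..<k} False (\<lambda>_. sample_seen_R N p R u))"

definition em_step :: "nat \<Rightarrow> (nat \<Rightarrow> nat set) \<Rightarrow> nat \<Rightarrow> real \<Rightarrow> nat set \<Rightarrow> nat set pmf" where
  "em_step n N k p R =
     map_pmf (\<lambda>g. {u\<in>{1..n}. g u}) (Pi_pmf {1..n} False (\<lambda>u. node_update N k p R u))"

text \<open>Joint law of the trajectory [R^{(0)}, ..., R^{(M)}] started from all nodes R.\<close>
primrec em_traj :: "nat \<Rightarrow> (nat \<Rightarrow> nat set) \<Rightarrow> nat \<Rightarrow> real \<Rightarrow> nat \<Rightarrow> nat set list pmf" where
  "em_traj n N k p 0 = return_pmf [{1..n}]"
| "em_traj n N k p (Suc M) =
     bind_pmf (em_traj n N k p M) (\<lambda>xs. map_pmf (\<lambda>y. xs @ [y]) (em_step n N k p (last xs)))"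

definition F :: "real \<Rightarrow> nat \<Rightarrow> real \<Rightarrow> real" where
  "F p k x = measure_pmf.prob (binomial_pmf k ((1 - p) * x)) {j. real j \<ge> (real k + 1) / 2}"

definition fixpoints :: "real \<Rightarrow> nat \<Rightarrow> real set" where
  "fixpoints p k = {x\<in>{0..1}. F p k x = x}"

definition p_star :: "nat \<Rightarrow> real" where
  "p_star k = (THE q. 1/9 \<le> q \<and> q < 1/2 \<and>
     (\<forall>p. 0 \<le> p \<and> p < q \<longrightarrow> card (fixpoints p k) = 3 \<and> 0 \<in> fixpoints p k) \<and>
     card (fixpoints q k) = 2 \<and>
     (\<forall>p. q < p \<and> p \<le> 1 \<longrightarrow> fixpoints p k = {0}))"

definition phi_plus :: "real \<Rightarrow> nat \<Rightarrow> real" where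
  "phi_plus p k = Max (fixpoints p k)"

end

theory Submission
  imports Defs "HOL-Real_Asymp.Real_Asymp"
begin

definition Gk :: "nat \<Rightarrow> real \<Rightarrow> real" where
  "Gk k y = (\<Sum>j\<in>{Suc (k div 2)..k}. real (k choose j) * y^j * (1-y)^(k-j))"

lemma F_eq_Gk:
  assumes "odd k" "0 \<le> (1-p)*x" "(1-p)*x \<le> 1"
  shows "F p k x = Gk k ((1-p)*x)"
proof -
  define r where "r = (1-p)*x"
  have r: "r \<in> {0..1}" using assms by (auto simp: r_def)
  have set: "{j. real j \<ge> (real k + 1) / 2} = {Suc (k div 2)..}"
  proof -
    obtain m where k: "k = 2*m+1" using assms(1) oddE by blast
    show ?thesis by (auto simp: k)
  qed
  have "F p k x = measure_pmf.prob (binomial_pmf k r) {Suc (k div 2)..}"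
    unfolding F_def set r_def by (rule refl)
  also have "\<dots> = measure_pmf.prob (binomial_pmf k r) ({Suc (k div 2)..} \<inter> set_pmf (binomial_pmf k r))"
    by (simp add: measure_Int_set_pmf)
  also have "\<dots> = measure_pmf.prob (binomial_pmf k r) ({Suc (k div 2)..k} \<inter> set_pmf (binomial_pmf k r))"
  proof -
    have "set_pmf (binomial_pmf k r) \<subseteq> {..k}" using r by (auto simp: set_pmf_binomial_eq split: if_splits)
    then have "{Suc (k div 2)..} \<inter> set_pmf (binomial_pmf k r) = {Suc (k div 2)..k} \<inter> set_pmf (binomial_pmf k r)"
      by auto
    then show ?thesis by simp
  qed
  also have "\<dots> = measure_pmf.prob (binomial_pmf k r) {Suc (k div 2)..k}"
    by (simp add: measure_Int_set_pmf)
  also have "\<dots> = (\<Sum>j\<in>{Suc (k div 2)..k}. pmf (binomial_pmf k r) j)"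
    by (simp add: measure_measure_pmf_finite)
  also have "\<dots> = Gk k r"
    unfolding Gk_def using r by (intro sum.cong refl) simp
  finally show ?thesis by (simp add: r_def)
qed

lemma tail_deriv:
  fixes n i :: nat
  assumes "i \<le> n"
  shows "((\<lambda>y. \<Sum>j\<in>{n-i+1..n+1}. real (Suc n choose j) * y^j * (1-y)^(Suc n - j)) has_real_derivative
          (real (Suc n) * real (n choose (n-i)) * y^(n-i) * (1-y)^i)) (at y)"
  using assms
proof (induction i)
  case 0
  have e: "(\<lambda>y. \<Sum>j\<in>{n-0+1..n+1}. real (Suc n choose j) * y^j * (1-y)^(Suc n - j)) = (\<lambda>y. y^(Suc n))"
    by simp
  show ?case unfolding e using DERIV_pow[of "Suc n" y] by simp
next
  case (Suc i)
  then obtain j where n: "n = j + Suc i" by (metis le_iff_add add.commute)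
  have set: "{n - Suc i + 1..n + 1} = insert (Suc j) {n-i+1..n+1}" using n by auto
  have fin: "Suc j \<notin> {n-i+1..n+1}" using n by auto
  let ?T = "\<lambda>y. real (Suc n choose Suc j) * (y^(Suc j) * (1-y)^(Suc i))"
  have e: "(\<lambda>y. \<Sum>j\<in>{n-Suc i+1..n+1}. real (Suc n choose j) * y^j * (1-y)^(Suc n - j)) =
        (\<lambda>y. ?T y + (\<Sum>j\<in>{n-i+1..n+1}. real (Suc n choose j) * y^j * (1-y)^(Suc n - j)))"
  proof (rule ext)
    fix y
    have "Suc n - Suc j = Suc i" using n by simp
    then show "(\<Sum>j\<in>{n-Suc i+1..n+1}. real (Suc n choose j) * y^j * (1-y)^(Suc n - j)) =
        ?T y + (\<Sum>j\<in>{n-i+1..n+1}. real (Suc n choose j) * y^j * (1-y)^(Suc n - j))"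
      by (simp only: set sum.insert[OF finite_atLeastAtMost fin])
  qed
  have d1: "((\<lambda>y. y^(Suc j)) has_real_derivative real (Suc j) * y^j) (at y)"
    using DERIV_pow[of "Suc j" y] by simp
  have d2: "((\<lambda>y. (1-y)^(Suc i)) has_real_derivative real (Suc i) * (1-y)^i * (-1)) (at y)"
    by (rule DERIV_cong[OF DERIV_power[OF DERIV_diff[OF DERIV_const DERIV_ident]]]) simp
  have dT: "(?T has_real_derivative real (Suc n choose Suc j) * (real (Suc j) * y^j * (1-y)^(Suc i)
       - y^(Suc j) * (real (Suc i) * (1-y)^i))) (at y)"
    by (rule DERIV_cong[OF DERIV_cmult[OF DERIV_mult[OF d1 d2], of "real (Suc n choose Suc j)"]])
       (simp_all add: algebra_simps)
  have IH: "((\<lambda>y. \<Sum>j\<in>{n-i+1..n+1}. real (Suc n choose j) * y^j * (1-y)^(Suc n - j)) has_real_derivative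
          (real (Suc n) * real (n choose (Suc j)) * y^(Suc j) * (1-y)^i)) (at y)"
    using Suc.IH[OF Suc_leD[OF Suc.prems]] n by (simp add: Suc_diff_le)
  have id1: "real (Suc n choose Suc j) * real (Suc j) = real (Suc n) * real (n choose j)"
    using Suc_times_binomial_eq[of n j] by (metis of_nat_mult)
  have id2: "real (Suc n choose Suc j) * real (Suc i) = real (Suc n) * real (n choose Suc j)"
  proof -
    have "(Suc n - Suc j) * (Suc n choose Suc j) = Suc n * ((Suc n - 1) choose Suc j)"
      by (rule binomial_absorb_comp)
    then have "Suc i * (Suc n choose Suc j) = Suc n * (n choose Suc j)" using n by simp
    then show ?thesis by (metis of_nat_mult mult.commute)
  qed
  have "real (Suc n choose Suc j) * (real (Suc j) * y^j * (1-y)^(Suc i) - y^(Suc j) * (real (Suc i) * (1-y)^i))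
       + real (Suc n) * real (n choose (Suc j)) * y^(Suc j) * (1-y)^i
       = real (Suc n) * real (n choose (n - Suc i)) * y^(n - Suc i) * (1-y)^(Suc i)"
  proof -
    have "real (Suc n choose Suc j) * (real (Suc j) * y^j * (1-y)^(Suc i) - y^(Suc j) * (real (Suc i) * (1-y)^i))
       = (real (Suc n choose Suc j) * real (Suc j)) * y^j * (1-y)^(Suc i) - (real (Suc n choose Suc j) * real (Suc i)) * y^(Suc j) * (1-y)^i"
      by (simp add: algebra_simps)
    also have "\<dots> = real (Suc n) * real (n choose j) * y^j * (1-y)^(Suc i) - real (Suc n) * real (n choose Suc j) * y^(Suc j) * (1-y)^i"
      by (simp only: id1 id2)
    finally show ?thesis using n by simp
  qed
  then show ?case unfolding e using DERIV_add[OF dT IH] by simp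
qed

lemma Gk_deriv:
  assumes "k = 2*m+1"
  shows "(Gk k has_real_derivative (real k * real ((2*m) choose m) * y^m * (1-y)^m)) (at y)"
proof -
  have "Gk k = (\<lambda>y. \<Sum>j\<in>{2*m-m+1..2*m+1}. real (Suc (2*m) choose j) * y^j * (1-y)^(Suc (2*m) - j))"
    unfolding Gk_def assms by (intro ext sum.cong) auto
  then show ?thesis using tail_deriv[of m "2*m" y] assms by simp
qed

context
  fixes m kk :: nat
  assumes m1: "1 \<le> m" and kk: "kk = 2*m+1"
begin
lemma kd: "kk div 2 = m" using kk by simp

definition "cc = real kk * real ((2*m) choose m)"
definition "Gd y = cc * y^m * (1-y)^m"
definition "ss y = y * Gd y - Gk kk y"
definition "hh y = Gk kk y / y"

lemma cc_pos: "cc > 0"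
  unfolding cc_def using kk by (simp add: zero_less_binomial)

lemma G_deriv: "(Gk kk has_real_derivative Gd y) (at y)"
  unfolding Gd_def cc_def using Gk_deriv[OF kk, of y] by simp

lemma G_cont: "continuous_on A (Gk kk)"
  by (meson DERIV_isCont G_deriv continuous_at_imp_continuous_on)

lemma G0: "Gk kk 0 = 0"
  unfolding Gk_def using kk by (intro sum.neutral) auto

lemma G1: "Gk kk 1 = 1"
proof -
  have "Gk kk 1 = (\<Sum>j\<in>{Suc m..kk}. if j = kk then 1 else 0)"
    unfolding Gk_def kd using kk by (intro sum.cong) auto
  also have "\<dots> = 1" by (subst sum.delta) (use kk in auto)
  finally show ?thesis .
qed

lemma Gd_pos: "0 < y \<Longrightarrow> y < 1 \<Longrightarrow> Gd y > 0"
  unfolding Gd_def using cc_pos by simp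

lemma G_strict_mono:
  assumes ab: "0 \<le> a" "a < b" "b \<le> 1" shows "Gk kk a < Gk kk b"
proof (rule DERIV_pos_imp_increasing_open[of a b "Gk kk"])
  fix x assume "a < x" "x < b"
  then show "\<exists>y. (Gk kk has_real_derivative y) (at x) \<and> 0 < y"
    using ab G_deriv Gd_pos by (intro exI[of _ "Gd x"]) auto
qed (use ab G_cont in auto)

lemma G_mono: "0 \<le> a \<Longrightarrow> a \<le> b \<Longrightarrow> b \<le> 1 \<Longrightarrow> Gk kk a \<le> Gk kk b"
  using G_strict_mono by (cases "a = b") (auto simp: less_eq_real_def)

lemma G_range: "0 \<le> y \<Longrightarrow> y \<le> 1 \<Longrightarrow> 0 \<le> Gk kk y \<and> Gk kk y \<le> 1"
  using G_mono[of 0 y] G_mono[of y 1] G0 G1 by auto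

lemma G_lt1: "0 \<le> y \<Longrightarrow> y < 1 \<Longrightarrow> Gk kk y < 1"
  using G_strict_mono[of y 1] G1 by auto

lemma G_pos: "0 < y \<Longrightarrow> y \<le> 1 \<Longrightarrow> Gk kk y > 0"
  using G_strict_mono[of 0 y] G0 by auto

lemma ss_deriv: "(ss has_real_derivative cc * real m * y^m * (1-y)^(m-1) * (1 - 2*y)) (at y)"
proof -
  obtain m' where m': "m = Suc m'" using m1 by (cases m) auto
  have dp1: "((\<lambda>y. y^(Suc m)) has_real_derivative real (Suc m) * y^m) (at y)"
    using DERIV_pow[of "Suc m" y] by simp
  have dp2: "((\<lambda>y. (1-y)^m) has_real_derivative real m * (1-y)^m' * (-1)) (at y)"
    by (rule DERIV_cong[OF DERIV_power[OF DERIV_diff[OF DERIV_const DERIV_ident]]]) (simp add: m')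
  have e: "ss = (\<lambda>y. cc * (y^(Suc m) * (1-y)^m) - Gk kk y)"
    unfolding ss_def Gd_def by (auto simp: algebra_simps)
  have "(ss has_real_derivative cc * (real (Suc m) * y^m * (1-y)^m + real m * (1-y)^m' * (-1) * y^(Suc m)) - Gd y) (at y)"
    unfolding e by (intro DERIV_diff DERIV_cmult DERIV_mult dp1 dp2 G_deriv)
  moreover have "cc * (real (Suc m) * y^m * (1-y)^m + real m * (1-y)^m' * (-1) * y^(Suc m)) - Gd y
     = cc * real m * y^m * (1-y)^(m-1) * (1 - 2*y)"
    unfolding Gd_def by (simp add: m' algebra_simps)
  ultimately show ?thesis by simp
qed

lemma ss_cont: "continuous_on A ss"
  by (meson DERIV_isCont ss_deriv continuous_at_imp_continuous_on)

lemma ss0: "ss 0 = 0" unfolding ss_def Gd_def using G0 by simp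
lemma ss1: "ss 1 = -1" unfolding ss_def Gd_def using G1 m1 by simp

lemma ss_inc:
  assumes ab: "0 \<le> a" "a < b" "b \<le> 1/2" shows "ss a < ss b"
proof (rule DERIV_pos_imp_increasing_open[of a b ss])
  fix x assume x: "a < x" "x < b"
  have "cc * real m * x^m * (1-x)^(m-1) * (1 - 2*x) > 0"
    using x ab cc_pos m1 by (intro mult_pos_pos) auto
  then show "\<exists>y. (ss has_real_derivative y) (at x) \<and> 0 < y"
    using ss_deriv by blast
qed (use ab ss_cont in auto)

lemma ss_dec:
  assumes ab: "1/2 \<le> a" "a < b" "b \<le> 1" shows "ss a > ss b"
proof (rule DERIV_neg_imp_decreasing_open[of a b ss])
  fix x assume x0: "a < x" "x < b"
  have x: "a < x" "x < b" "1/2 \<le> a" "b \<le> 1" using x0 ab by auto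
  have "cc * real m * x^m * (1-x)^(m-1) > 0" using x cc_pos m1 by (auto intro!: mult_pos_pos)
  moreover have "1 - 2*x < 0" using x by simp
  ultimately show "\<exists>y. (ss has_real_derivative y) (at x) \<and> y < 0"
    using ss_deriv[of x] by (intro exI[of _ "cc * real m * x^m * (1-x)^(m-1) * (1 - 2*x)"]) (auto simp: mult_pos_neg)
qed (use ab in \<open>auto intro!: ss_cont\<close>)

lemma ystar_ex: "\<exists>ys. 1/2 < ys \<and> ys < 1 \<and> ss ys = 0"
proof -
  have "ss (1/2) > 0" using ss_inc[of 0 "1/2"] ss0 by simp
  moreover have "\<forall>x. 1/2 \<le> x \<and> x \<le> 1 \<longrightarrow> isCont ss x"
    using DERIV_isCont ss_deriv by blast
  ultimately obtain x where x: "1/2 \<le> x" "x \<le> 1" "ss x = 0"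
    using IVT2[of ss 1 0 "1/2"] ss1 by auto
  moreover have "x \<noteq> 1/2"
  proof
    assume "x = 1/2" with x(3) \<open>ss (1/2) > 0\<close> show False by simp
  qed
  moreover have "x \<noteq> 1" using x ss1 by auto
  ultimately show ?thesis by (intro exI[of _ x]) auto
qed

definition "ys = (SOME y. 1/2 < y \<and> y < 1 \<and> ss y = 0)"

lemma ys: "1/2 < ys" "ys < 1" "ss ys = 0"
  using someI_ex[OF ystar_ex] unfolding ys_def by auto

lemma ss_pos: "0 < y \<Longrightarrow> y < ys \<Longrightarrow> ss y > 0"
proof -
  assume y: "0 < y" "y < ys"
  show ?thesis
  proof (cases "y \<le> 1/2")
    case True
    then show ?thesis using ss_inc[of 0 y] ss0 y by simp
  next
    case False
    then show ?thesis using ss_dec[of y ys] ys y by simp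
  qed
qed

lemma ss_neg: "ys < y \<Longrightarrow> y \<le> 1 \<Longrightarrow> ss y < 0"
  using ss_dec[of ys y] ys by simp

lemma hh_deriv: "y \<noteq> 0 \<Longrightarrow> (hh has_real_derivative ss y / y^2) (at y)"
proof -
  assume y: "y \<noteq> 0"
  have "((\<lambda>y. Gk kk y / y) has_real_derivative (Gd y * y - Gk kk y * 1) / y^2) (at y)"
    using DERIV_divide[OF G_deriv DERIV_ident y] by (simp add: power2_eq_square)
  moreover have "Gd y * y - Gk kk y * 1 = ss y"
    unfolding ss_def by (simp add: algebra_simps)
  ultimately show ?thesis unfolding hh_def[abs_def] by simp
qed

lemma hh_cont: "0 < a \<Longrightarrow> continuous_on {a..b} hh"
proof (rule continuous_at_imp_continuous_on, rule ballI)
  fix x assume "0 < a" "x \<in> {a..b}"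
  then have "x \<noteq> 0" by auto
  then show "isCont hh x" using DERIV_isCont[OF hh_deriv] by blast
qed

lemma hh_inc:
  assumes ab: "0 < a" "a < b" "b \<le> ys" shows "hh a < hh b"
proof (rule DERIV_pos_imp_increasing_open[of a b hh])
  fix x assume x: "a < x" "x < b"
  then have "ss x / x^2 > 0" using ab ss_pos by (intro divide_pos_pos) auto
  moreover have "x \<noteq> 0" using x ab by auto
  ultimately show "\<exists>y. (hh has_real_derivative y) (at x) \<and> 0 < y"
    using hh_deriv by blast
qed (use ab hh_cont in auto)

lemma hh_dec:
  assumes ab: "ys \<le> a" "a < b" "b \<le> 1" shows "hh a > hh b"
proof (rule DERIV_neg_imp_decreasing_open[of a b hh])
  fix x assume x0: "a < x" "x < b"
  have x: "a < x" "x < b" "ys \<le> a" "b \<le> 1" using x0 ab by auto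
  have "ss x < 0" using ss_neg x by simp
  moreover have "x \<noteq> 0" using x ys by auto
  ultimately show "\<exists>y. (hh has_real_derivative y) (at x) \<and> y < 0"
    using hh_deriv by (intro exI[of _ "ss x / x^2"]) (auto simp: divide_neg_pos)
next
  show "continuous_on {a..b} hh" using ys ab by (intro hh_cont) auto
qed (use ab in auto)

definition "hs = hh ys"

lemma hh_lt: "0 < y \<Longrightarrow> y \<le> 1 \<Longrightarrow> y \<noteq> ys \<Longrightarrow> hh y < hs"
proof -
  assume y: "0 < y" "y \<le> 1" "y \<noteq> ys"
  show ?thesis
  proof (cases "y < ys")
    case True then show ?thesis unfolding hs_def using hh_inc[of y ys] y by auto
  next
    case False then have "ys < y" using y by auto
    then show ?thesis unfolding hs_def using hh_dec[of ys y] y by auto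
  qed
qed

lemma hh_le: "0 < y \<Longrightarrow> y \<le> 1 \<Longrightarrow> hh y \<le> hs"
  using hh_lt[of y] unfolding hs_def by (cases "y = ys") auto

lemma ys_hs_lt1: "ys * hs < 1"
  unfolding hs_def hh_def using G_lt1[of ys] ys by simp

lemma hs_lt2: "hs < 2"
proof -
  have "ys * hs < 1" by (rule ys_hs_lt1)
  then have "hs < 1 / ys" using ys by (simp add: field_simps)
  also have "\<dots> < 2" using ys by (simp add: field_simps)
  finally show ?thesis .
qed

lemma hh_small: "0 < y \<Longrightarrow> y \<le> 1 \<Longrightarrow> hh y \<le> real (2^kk) * y"
proof -
  assume y: "0 < y" "y \<le> 1"
  have "Gk kk y \<le> (\<Sum>j\<in>{Suc m..kk}. real (kk choose j) * y^2)"
    unfolding Gk_def kd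
  proof (rule sum_mono)
    fix j assume j: "j \<in> {Suc m..kk}"
    have "y^j \<le> y^2" using j m1 y kk by (intro power_decreasing) auto
    moreover have "(1-y)^(kk-j) \<le> 1" using y by (intro power_le_one) auto
    ultimately have "y^j * (1-y)^(kk-j) \<le> y^2 * 1"
      using y by (intro mult_mono) auto
    then show "real (kk choose j) * y^j * (1-y)^(kk-j) \<le> real (kk choose j) * y^2"
      by (simp add: mult.assoc mult_left_mono)
  qed
  also have "\<dots> = real (\<Sum>j\<in>{Suc m..kk}. (kk choose j)) * y^2"
    by (simp add: sum_distrib_right)
  also have "\<dots> \<le> real (2^kk) * y^2"
  proof -
    have "(\<Sum>j\<in>{Suc m..kk}. (kk choose j)) \<le> (\<Sum>j\<in>{..kk}. (kk choose j))"
      by (intro sum_mono2) auto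
    then have "(\<Sum>j\<in>{Suc m..kk}. (kk choose j)) \<le> 2^kk" using choose_row_sum[of kk] by simp
    then have "real (\<Sum>j\<in>{Suc m..kk}. (kk choose j)) \<le> real (2^kk)" by (simp only: of_nat_le_iff)
    then show ?thesis by (intro mult_right_mono) auto
  qed
  finally show ?thesis unfolding hh_def using y by (simp add: field_simps power2_eq_square)
qed

end

lemma G34_large:
  assumes k: "odd k" "k \<ge> 11"
  shows "Gk k (3/4) \<ge> 27/32"
proof -
  have bd: "binomial_distribution (3/4::real)" by unfold_locales auto
  have "Gk k (3/4) = F 0 k (3/4)" using F_eq_Gk[of k 0 "3/4"] k by simp
  also have "F 0 k (3/4) = 1 - measure_pmf.prob (binomial_pmf k (3/4)) (- {j. real j \<ge> (real k + 1) / 2})"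
  proof -
    have "measure_pmf.prob (binomial_pmf k (3/4)) (UNIV - {j. real j \<ge> (real k + 1) / 2})
       = 1 - measure_pmf.prob (binomial_pmf k (3/4)) {j. real j \<ge> (real k + 1) / 2}"
      using measure_pmf.prob_compl[of "{j. real j \<ge> (real k + 1) / 2}" "binomial_pmf k (3/4)"] by simp
    then show ?thesis unfolding F_def by (simp add: Compl_eq_Diff_UNIV)
  qed
  finally have e: "Gk k (3/4) = 1 - measure_pmf.prob (binomial_pmf k (3/4)) (- {j. real j \<ge> (real k + 1) / 2})" .
  have sub: "- {j. real j \<ge> (real k + 1) / 2} \<subseteq> {x. real x \<le> real k * (3/4) - (real k + 2)/4}"
  proof
    fix j assume "j \<in> - {j. real j \<ge> (real k + 1) / 2}"
    then have "2 * j < k + 1" by simp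
    then have "2 * j \<le> k - 1" using k by presburger
    then have "real (2*j) \<le> real (k - 1)" by (simp only: of_nat_le_iff)
    then have "2 * real j \<le> real k - 1" using k by (simp add: of_nat_diff)
    then show "j \<in> {x. real x \<le> real k * (3/4) - (real k + 2)/4}" by (simp add: field_simps)
  qed
  have "measure_pmf.prob (binomial_pmf k (3/4)) (- {j. real j \<ge> (real k + 1) / 2})
      \<le> measure_pmf.prob (binomial_pmf k (3/4)) {x. real x \<le> real k * (3/4) - (real k + 2)/4}"
    by (intro measure_pmf.finite_measure_mono sub) auto
  also have "\<dots> \<le> exp (- 2 * ((real k + 2)/4)\<^sup>2 / real k)"
    using binomial_distribution.prob_le[OF bd, of k "(real k + 2)/4"] k by simp
  also have "\<dots> \<le> exp (- (48/25))"
  proof -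
    have "(real k - 11) * (25 * real k - 9) \<ge> 0" using k by (intro mult_nonneg_nonneg) auto
    then have "48/25 * real k \<le> 2 * ((real k + 2)/4)\<^sup>2"
      by (simp add: power2_eq_square algebra_simps)
    then have "48/25 \<le> 2 * ((real k + 2)/4)\<^sup>2 / real k" using k by (simp add: field_simps)
    then show ?thesis by simp
  qed
  also have "\<dots> \<le> 5/32"
  proof -
    have "(1 + (48/25) / real (32::nat)) ^ 32 \<le> exp (48/25::real)"
      by (rule exp_ge_one_plus_x_over_n_power_n) auto
    moreover have "(32/5::real) \<le> (1 + (48/25) / real (32::nat)) ^ 32" by (simp add: power_divide)
    ultimately have "32/5 \<le> exp (48/25::real)" by linarith
    then show ?thesis by (simp add: exp_minus field_simps)
  qed
  finally show ?thesis using e by linarith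
qed

lemma G34_3: "Gk 3 (3/4) \<ge> 27/32" unfolding Gk_def by code_simp
lemma G34_5: "Gk 5 (3/4) \<ge> 27/32" unfolding Gk_def by code_simp
lemma G34_7: "Gk 7 (3/4) \<ge> 27/32" unfolding Gk_def by code_simp
lemma G34_9: "Gk 9 (3/4) \<ge> 27/32" unfolding Gk_def by code_simp

lemma G34:
  assumes k: "odd k" "k \<ge> 3"
  shows "Gk k (3/4) \<ge> 27/32"
proof (cases "k \<ge> 11")
  case True then show ?thesis using G34_large k by blast
next
  case False
  then have "k = 3 \<or> k = 5 \<or> k = 7 \<or> k = 9" using k by presburger
  then show ?thesis using G34_3 G34_5 G34_7 G34_9 by auto
qed

context
  fixes m kk :: nat
  assumes m1: "1 \<le> m" and kk: "kk = 2*m+1"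
begin

lemma mul_div_self: "(y::real) \<noteq> 0 \<Longrightarrow> a = y * (a / y)" by simp

lemma aux1: "0 < (a::real) \<Longrightarrow> 0 < x \<Longrightarrow> a*x*H = x \<longleftrightarrow> H = 1/a"
proof -
  assume a: "0 < a" and x: "0 < x"
  have "a*x*H = x \<longleftrightarrow> x*(a*H) = x*1" by (simp add: ac_simps)
  also have "\<dots> \<longleftrightarrow> a*H = 1" using x by simp
  also have "\<dots> \<longleftrightarrow> H = 1/a" using a by (auto simp: field_simps)
  finally show ?thesis .
qed

lemma aux2: "0 < (a::real) \<Longrightarrow> 0 < x \<Longrightarrow> a*x*H > x \<longleftrightarrow> H > 1/a"
proof -
  assume a: "0 < a" and x: "0 < x"
  have "a*x*H > x \<longleftrightarrow> x*(a*H) > x*1" by (simp add: ac_simps)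
  also have "\<dots> \<longleftrightarrow> a*H > 1" using x by simp
  also have "\<dots> \<longleftrightarrow> H > 1/a" using a by (auto simp: field_simps)
  finally show ?thesis .
qed

lemma aux3: "0 < (a::real) \<Longrightarrow> 0 < x \<Longrightarrow> a*x*H < x \<longleftrightarrow> H < 1/a"
proof -
  assume a: "0 < a" and x: "0 < x"
  have "a*x*H < x \<longleftrightarrow> x*(a*H) < x*1" by (simp add: ac_simps)
  also have "\<dots> \<longleftrightarrow> a*H < 1" using x by simp
  also have "\<dots> \<longleftrightarrow> H < 1/a" using a by (auto simp: field_simps)
  finally show ?thesis .
qed

lemma kk_odd: "odd kk" using kk by simp

lemma F_G: "0 \<le> p \<Longrightarrow> p \<le> 1 \<Longrightarrow> 0 \<le> x \<Longrightarrow> x \<le> 1 \<Longrightarrow> F p kk x = Gk kk ((1-p)*x)"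
  by (rule F_eq_Gk[OF kk_odd]) (auto intro: mult_le_one)

lemma hs_ge: "hs m kk \<ge> 9/8"
proof -
  have "Gk kk (3/4) \<ge> 27/32" using G34[OF kk_odd] kk m1 by simp
  then have "hh kk (3/4) \<ge> 9/8" unfolding hh_def[OF m1 kk] by simp
  then show ?thesis using hh_le[OF m1 kk, of "3/4"] by simp
qed

definition "qq = 1 - 1 / hs m kk"

lemma qq_bounds: "1/9 \<le> qq" "qq < 1/2" "0 < qq"
proof -
  have h: "hs m kk \<ge> 9/8" "hs m kk < 2" using hs_ge hs_lt2[OF m1 kk] by auto
  then show "1/9 \<le> qq" "qq < 1/2" "0 < qq" unfolding qq_def by (auto simp: field_simps)
qed

lemma hh_inj_left: "0 < a \<Longrightarrow> a \<le> ys m kk \<Longrightarrow> 0 < b \<Longrightarrow> b \<le> ys m kk \<Longrightarrow> hh kk a = hh kk b \<Longrightarrow> a = b"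
  using hh_inc[OF m1 kk, of a b] hh_inc[OF m1 kk, of b a] by (cases a b rule: linorder_cases) auto

lemma hh_inj_right: "ys m kk \<le> a \<Longrightarrow> a \<le> 1 \<Longrightarrow> ys m kk \<le> b \<Longrightarrow> b \<le> 1 \<Longrightarrow> hh kk a = hh kk b \<Longrightarrow> a = b"
  using hh_dec[OF m1 kk, of a b] hh_dec[OF m1 kk, of b a] by (cases a b rule: linorder_cases) auto

lemma fix_iff:
  assumes p: "0 \<le> p" "p < 1" and x: "0 < x" "x \<le> 1"
  shows "F p kk x = x \<longleftrightarrow> hh kk ((1-p)*x) = 1/(1-p)"
proof -
  have y: "0 < (1-p)*x" using p x by simp
  have "F p kk x = Gk kk ((1-p)*x)" using F_G p x by simp
  moreover have "Gk kk ((1-p)*x) = (1-p)*x * hh kk ((1-p)*x)" unfolding hh_def[OF m1 kk] by (rule mul_div_self) (use y in linarith)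
  ultimately show ?thesis using aux1[of "1-p" x "hh kk ((1-p)*x)"] p x by simp
qed

lemma F_cmp:
  assumes p: "0 \<le> p" "p < 1" and x: "0 < x" "x \<le> 1"
  shows "F p kk x > x \<longleftrightarrow> hh kk ((1-p)*x) > 1/(1-p)"
    and "F p kk x < x \<longleftrightarrow> hh kk ((1-p)*x) < 1/(1-p)"
proof -
  have y: "0 < (1-p)*x" using p x by simp
  have "F p kk x = Gk kk ((1-p)*x)" using F_G p x by simp
  moreover have "Gk kk ((1-p)*x) = (1-p)*x * hh kk ((1-p)*x)" unfolding hh_def[OF m1 kk] by (rule mul_div_self) (use y in linarith)
  ultimately show "F p kk x > x \<longleftrightarrow> hh kk ((1-p)*x) > 1/(1-p)"
    and "F p kk x < x \<longleftrightarrow> hh kk ((1-p)*x) < 1/(1-p)"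
    using aux2[of "1-p" x "hh kk ((1-p)*x)"] aux3[of "1-p" x "hh kk ((1-p)*x)"] p x by simp_all
qed

lemma F0: "0 \<le> p \<Longrightarrow> p \<le> 1 \<Longrightarrow> F p kk 0 = 0"
  using F_G[of p 0] G0[OF m1 kk] by simp

lemma fp_struct:
  assumes p: "0 \<le> p" "p < qq"
  shows "\<exists>y1 y2. 0 < y1 \<and> y1 < ys m kk \<and> ys m kk < y2 \<and> y2 \<le> 1 - p \<and>
     hh kk y1 = 1/(1-p) \<and> hh kk y2 = 1/(1-p) \<and>
     fixpoints p kk = {0, y1/(1-p), y2/(1-p)}"
proof -
  let ?ys = "ys m kk" and ?hs = "hs m kk" and ?h = "hh kk"
  define L where "L = 1/(1-p)"
  have p1: "p < 1/2" using p qq_bounds by auto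
  have hs_pos: "?hs > 0" using hs_ge by simp
  have L1: "1 \<le> L" using p p1 by (simp add: L_def field_simps)
  have Lhs: "L < ?hs"
  proof -
    have "p < 1 - 1/?hs" using p qq_def by simp
    then have "1/?hs < 1 - p" by simp
    then have "1 < ?hs * (1-p)" using hs_pos by (simp add: field_simps)
    then show ?thesis unfolding L_def using p1 by (simp add: field_simps)
  qed
  have ysr: "1/2 < ?ys" "?ys < 1" using ys[OF m1 kk] by auto
  have ys1p: "?ys < 1 - p"
  proof -
    have "?ys * ?hs < 1" by (rule ys_hs_lt1[OF m1 kk])
    then have "?ys < 1/?hs" using hs_pos by (simp add: field_simps)
    also have "1/?hs \<le> 1 - p" using p qq_def by simp
    finally show ?thesis .
  qed
  define y0 where "y0 = min (?ys/2) (1/real (2^kk))"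
  have y0: "0 < y0" "y0 < ?ys" using ysr by (auto simp: y0_def)
  have "?h y0 \<le> real (2^kk) * y0" using hh_small[OF m1 kk, of y0] y0 ysr by auto
  also have "\<dots> \<le> 1" unfolding y0_def by (auto simp: field_simps min_def)
  finally have hy0: "?h y0 \<le> L" using L1 by simp
  have "\<exists>y1. y0 \<le> y1 \<and> y1 \<le> ?ys \<and> ?h y1 = L"
    by (rule IVT') (use hy0 Lhs y0 hh_cont[OF m1 kk, of y0 ?ys] in \<open>auto simp: hs_def[OF m1 kk]\<close>)
  then obtain y1 where y1: "y0 \<le> y1" "y1 \<le> ?ys" "?h y1 = L" by blast
  have y1ne: "y1 \<noteq> ?ys" using y1 Lhs hs_def[OF m1 kk] by auto
  have h1p: "?h (1-p) \<le> L"
    unfolding hh_def[OF m1 kk] L_def using G_range[OF m1 kk, of "1-p"] p p1 by (auto simp: divide_right_mono)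
  have "\<exists>y2. ?ys \<le> y2 \<and> y2 \<le> 1-p \<and> ?h y2 = L"
    by (rule IVT2') (use h1p Lhs ys1p ysr hh_cont[OF m1 kk, of ?ys "1-p"] in \<open>auto simp: hs_def[OF m1 kk]\<close>)
  then obtain y2 where y2: "?ys \<le> y2" "y2 \<le> 1-p" "?h y2 = L" by blast
  have y2ne: "y2 \<noteq> ?ys" using y2 Lhs hs_def[OF m1 kk] by auto
  have pos1p: "0 < 1 - p" using p1 by simp
  have "fixpoints p kk = {0, y1/(1-p), y2/(1-p)}"
  proof (intro set_eqI iffI)
    fix x assume "x \<in> fixpoints p kk"
    then have x: "0 \<le> x" "x \<le> 1" "F p kk x = x" unfolding fixpoints_def by auto
    show "x \<in> {0, y1/(1-p), y2/(1-p)}"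
    proof (cases "x = 0")
      case False
      then have xp: "0 < x" using x by simp
      define y where "y = (1-p)*x"
      have y: "0 < y" "y \<le> 1 - p" using xp x pos1p by (auto simp: y_def mult_le_cancel_left1)
      have hy: "?h y = L" using fix_iff[of p x] x xp p p1 by (simp add: y_def L_def)
      have "y = y1 \<or> y = y2"
      proof (cases "y \<le> ?ys")
        case True then show ?thesis using hh_inj_left[of y y1] y y1 y0 hy by auto
      next
        case False then show ?thesis using hh_inj_right[of y y2] y y2 hy p by auto
      qed
      then show ?thesis using pos1p by (auto simp: y_def)
    qed simp
  next
    fix x assume x: "x \<in> {0, y1/(1-p), y2/(1-p)}"
    {
      fix y assume y: "0 < y" "y \<le> 1-p" "?h y = L"
      have xr: "0 < y/(1-p)" "y/(1-p) \<le> 1" using y pos1p by (auto simp: field_simps)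
      have "F p kk (y/(1-p)) = y/(1-p)"
        using fix_iff[of p "y/(1-p)"] xr p p1 y pos1p by (simp add: L_def)
      then have "y/(1-p) \<in> fixpoints p kk" using xr unfolding fixpoints_def by auto
    } note mem = this
    have "0 \<in> fixpoints p kk" unfolding fixpoints_def using F0 p p1 by auto
    moreover have "y1/(1-p) \<in> fixpoints p kk" using mem[of y1] y1 y0 ys1p by auto
    moreover have "y2/(1-p) \<in> fixpoints p kk" using mem[of y2] y2 y0 ysr by auto
    ultimately show "x \<in> fixpoints p kk" using x by auto
  qed
  then show ?thesis
    using y0 y1 y1ne y2 y2ne by (intro exI[of _ y1] exI[of _ y2]) (auto simp: L_def)
qed

lemma fp_qq: "fixpoints qq kk = {0, ys m kk / (1 - qq)}"
proof -
  let ?ys = "ys m kk" and ?hs = "hs m kk" and ?h = "hh kk"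
  have hs_pos: "?hs > 0" using hs_ge by simp
  have q: "0 \<le> qq" "qq < 1" using qq_bounds by auto
  have e: "1/(1-qq) = ?hs" unfolding qq_def using hs_pos by simp
  have ysr: "1/2 < ?ys" "?ys < 1" using ys[OF m1 kk] by auto
  show ?thesis
  proof (intro set_eqI iffI)
    fix x assume "x \<in> fixpoints qq kk"
    then have x: "0 \<le> x" "x \<le> 1" "F qq kk x = x" unfolding fixpoints_def by auto
    show "x \<in> {0, ?ys/(1-qq)}"
    proof (cases "x = 0")
      case False
      then have xp: "0 < x" using x by simp
      have y: "0 < (1-qq)*x" "(1-qq)*x \<le> 1" using xp x q by (auto intro: mult_le_one)
      have "?h ((1-qq)*x) = ?hs" using fix_iff[of qq x] x xp q e by simp
      then have "(1-qq)*x = ?ys" using hh_lt[OF m1 kk, of "(1-qq)*x"] y by force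
      then show ?thesis using q by (auto simp: field_simps)
    qed simp
  next
    fix x assume x: "x \<in> {0, ?ys/(1-qq)}"
    have "0 \<in> fixpoints qq kk" unfolding fixpoints_def using F0 q by auto
    moreover have "?ys/(1-qq) \<in> fixpoints qq kk"
    proof -
      have e2: "?ys/(1-qq) = ?ys * ?hs" using e by (metis times_divide_eq_right mult.right_neutral)
      have xr: "0 < ?ys/(1-qq)" "?ys/(1-qq) \<le> 1"
        unfolding e2 using ys_hs_lt1[OF m1 kk] hs_pos ysr by auto
      have "F qq kk (?ys/(1-qq)) = ?ys/(1-qq)"
        using fix_iff[of qq "?ys/(1-qq)"] xr q e by (simp add: hs_def[OF m1 kk])
      then show ?thesis using xr unfolding fixpoints_def by auto
    qed
    ultimately show "x \<in> fixpoints qq kk" using x by auto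
  qed
qed

lemma fp_above: "qq < p \<Longrightarrow> p \<le> 1 \<Longrightarrow> fixpoints p kk = {0}"
proof -
  assume p: "qq < p" "p \<le> 1"
  have hs_pos: "hs m kk > 0" using hs_ge by simp
  have q: "0 < qq" using qq_bounds by auto
  show ?thesis
  proof (intro set_eqI iffI)
    fix x assume "x \<in> fixpoints p kk"
    then have x: "0 \<le> x" "x \<le> 1" "F p kk x = x" unfolding fixpoints_def by auto
    show "x \<in> {0}"
    proof (rule ccontr)
      assume "x \<notin> {0}"
      then have xp: "0 < x" using x by auto
      show False
      proof (cases "p = 1")
        case True
        then show False using F_G[of p x] x xp G0[OF m1 kk] by simp
      next
        case False
        then have p1: "p < 1" using p by simp
        have y: "0 < (1-p)*x" "(1-p)*x \<le> 1" using xp x p1 q p by (auto intro: mult_le_one)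
        have "hh kk ((1-p)*x) = 1/(1-p)" using fix_iff[of p x] x xp p1 p q by simp
        moreover have "1/(1-p) > hs m kk"
        proof -
          have "1 - 1/hs m kk < p" using p qq_def by simp
          then have "1 - p < 1/hs m kk" by simp
          then have "(1-p) * hs m kk < 1" using hs_pos by (simp add: field_simps)
          then show ?thesis using p1 by (simp add: field_simps)
        qed
        ultimately show False using hh_le[OF m1 kk, of "(1-p)*x"] y by simp
      qed
    qed
  next
    fix x :: real assume "x \<in> {0}"
    then show "x \<in> fixpoints p kk" unfolding fixpoints_def using F0 p q by auto
  qed
qed

lemma card_struct: "0 \<le> p \<Longrightarrow> p < qq \<Longrightarrow> card (fixpoints p kk) = 3 \<and> 0 \<in> fixpoints p kk"
proof -
  assume p: "0 \<le> p" "p < qq"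
  obtain y1 y2 where y: "0 < y1" "y1 < ys m kk" "ys m kk < y2" "y2 \<le> 1 - p"
    and fp: "fixpoints p kk = {0, y1/(1-p), y2/(1-p)}"
    using fp_struct[OF p] by blast
  have pos: "0 < 1 - p" using p qq_bounds by auto
  have "y1/(1-p) < y2/(1-p)" using y pos by (simp add: divide_strict_right_mono)
  moreover have "0 < y1/(1-p)" using y pos by simp
  ultimately show ?thesis unfolding fp by (auto simp: card_insert_if)
qed

lemma p_star_eq: "p_star kk = qq"
  unfolding p_star_def
proof (rule the_equality)
  have hs_pos: "hs m kk > 0" using hs_ge by simp
  have c2: "card (fixpoints qq kk) = 2"
  proof -
    have "ys m kk / (1 - qq) > 0" using ys[OF m1 kk] qq_bounds by simp
    then show ?thesis unfolding fp_qq by (auto simp: card_insert_if)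
  qed
  show "1/9 \<le> qq \<and> qq < 1/2 \<and>
     (\<forall>p. 0 \<le> p \<and> p < qq \<longrightarrow> card (fixpoints p kk) = 3 \<and> 0 \<in> fixpoints p kk) \<and>
     card (fixpoints qq kk) = 2 \<and>
     (\<forall>p. qq < p \<and> p \<le> 1 \<longrightarrow> fixpoints p kk = {0})"
    using qq_bounds card_struct c2 fp_above by auto
  fix q assume P: "1/9 \<le> q \<and> q < 1/2 \<and>
     (\<forall>p. 0 \<le> p \<and> p < q \<longrightarrow> card (fixpoints p kk) = 3 \<and> 0 \<in> fixpoints p kk) \<and>
     card (fixpoints q kk) = 2 \<and>
     (\<forall>p. q < p \<and> p \<le> 1 \<longrightarrow> fixpoints p kk = {0})"
  show "q = qq"
  proof (rule ccontr)
    assume "q \<noteq> qq"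
    then consider "q < qq" | "qq < q" by linarith
    then show False
    proof cases
      case 1
      then have "fixpoints qq kk = {0}" using P qq_bounds by auto
      then show False using c2 by simp
    next
      case 2
      then have "fixpoints q kk = {0}" using fp_above P by auto
      then show False using P by simp
    qed
  qed
qed

end

lemma analytic_main:
  assumes k: "odd k" "k \<ge> 3" and p: "0 \<le> p" "p < p_star k"
  shows "p < 1/2 \<and> (\<exists>\<phi>m. 0 < \<phi>m \<and> \<phi>m < phi_plus p k \<and> phi_plus p k \<le> 1 \<and>
     (\<forall>x. \<phi>m < x \<and> x < phi_plus p k \<longrightarrow> F p k x > x) \<and>
     (\<forall>x. phi_plus p k < x \<and> x \<le> 1 \<longrightarrow> F p k x < x))"
proof -
  obtain m where kk: "k = 2*m+1" using k(1) oddE by blast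
  have m1: "1 \<le> m" using k kk by simp
  have pq: "p < qq m k" using p p_star_eq[OF m1 kk] by simp
  have p12: "p < 1/2" using pq qq_bounds[OF m1 kk] by simp
  obtain y1 y2 where y: "0 < y1" "y1 < ys m k" "ys m k < y2" "y2 \<le> 1 - p"
    and h: "hh k y1 = 1/(1-p)" "hh k y2 = 1/(1-p)"
    and fp: "fixpoints p k = {0, y1/(1-p), y2/(1-p)}"
    using fp_struct[OF m1 kk p(1) pq] by blast
  have pos: "0 < 1 - p" using p12 by simp
  have lt: "y1/(1-p) < y2/(1-p)" using y pos by (simp add: divide_strict_right_mono)
  have pos1: "0 < y1/(1-p)" using y pos by simp
  have pp: "phi_plus p k = y2/(1-p)"
    unfolding phi_plus_def fp using lt pos1 by (intro Max_eqI) auto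
  have le1: "y2/(1-p) \<le> 1" using y pos by simp
  have ysr: "1/2 < ys m k" "ys m k < 1" using ys[OF m1 kk] by auto
  have above: "F p k x > x" if x: "y1/(1-p) < x" "x < y2/(1-p)" for x
  proof -
    have xr: "0 < x" "x \<le> 1" using x pos1 le1 by auto
    have yx: "y1 < (1-p)*x" "(1-p)*x < y2" using x pos by (auto simp: field_simps)
    have "hh k ((1-p)*x) > 1/(1-p)"
    proof (cases "(1-p)*x \<le> ys m k")
      case True then show ?thesis using hh_inc[OF m1 kk, of y1 "(1-p)*x"] yx y h by auto
    next
      case False then show ?thesis using hh_dec[OF m1 kk, of "(1-p)*x" y2] yx y h pos p by auto
    qed
    then show ?thesis using F_cmp(1)[OF m1 kk p(1) _ xr] p12 by simp
  qed
  have below: "F p k x < x" if x: "y2/(1-p) < x" "x \<le> 1" for x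
  proof -
    have xr: "0 < x" "x \<le> 1" using x pos1 lt by auto
    have yx1: "y2 < (1-p)*x" using x pos by (auto simp: field_simps)
    have yx2: "(1-p)*x \<le> 1" by (rule mult_le_one) (use p x p12 xr in auto)
    note yx = yx1 yx2
    have "hh k ((1-p)*x) < 1/(1-p)"
      using hh_dec[OF m1 kk, of y2 "(1-p)*x"] yx y h by auto
    then show ?thesis using F_cmp(2)[OF m1 kk p(1) _ xr] p12 by simp
  qed
  have ab: "\<forall>x. y1/(1-p) < x \<and> x < y2/(1-p) \<longrightarrow> F p k x > x" using above by blast
  have be: "\<forall>x. y2/(1-p) < x \<and> x \<le> 1 \<longrightarrow> F p k x < x" using below by blast
  show ?thesis unfolding pp
    using p12 pos1 lt le1 ab be by blast
qed

lemma F_props: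
  assumes k: "odd k" "k \<ge> 3" and p: "0 \<le> p" "p \<le> 1"
  shows "continuous_on {0..1} (F p k)"
    and "\<And>x y. 0 \<le> x \<Longrightarrow> x \<le> y \<Longrightarrow> y \<le> 1 \<Longrightarrow> F p k x \<le> F p k y"
    and "\<And>x. 0 \<le> x \<Longrightarrow> x \<le> 1 \<Longrightarrow> 0 \<le> F p k x \<and> F p k x \<le> 1"
proof -
  obtain m where kk: "k = 2*m+1" using k(1) oddE by blast
  have m1: "1 \<le> m" using k kk by simp
  have e: "F p k x = Gk k ((1-p)*x)" if x: "x \<in> {0..1}" for x
    by (rule F_G[OF m1 kk]) (use p x in auto)
  have r: "0 \<le> (1-p)*x \<and> (1-p)*x \<le> 1" if x: "0 \<le> x" "x \<le> 1" for x
  proof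
    show "0 \<le> (1-p)*x" using p x by simp
    show "(1-p)*x \<le> 1" by (rule mult_le_one) (use p x in auto)
  qed
  have "continuous_on {0..1} (Gk k \<circ> (\<lambda>x. (1-p)*x))"
    by (intro continuous_on_compose G_cont[OF m1 kk] continuous_on_mult_left continuous_on_id)
  then have "continuous_on {0..1} (\<lambda>x. Gk k ((1-p)*x))" by (simp add: o_def)
  then show "continuous_on {0..1} (F p k)"
    by (rule continuous_on_eq) (use e in simp)
  show "F p k x \<le> F p k y" if xy: "0 \<le> x" "x \<le> y" "y \<le> 1" for x y
  proof -
    have a: "(1-p)*x \<le> (1-p)*y" by (rule mult_left_mono) (use xy p in auto)
    have b: "0 \<le> (1-p)*x" using r[of x] xy by linarith
    have c: "(1-p)*y \<le> 1" using r[of y] xy by linarith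
    have "Gk k ((1-p)*x) \<le> Gk k ((1-p)*y)" by (rule G_mono[OF m1 kk b a c])
    moreover have "F p k x = Gk k ((1-p)*x)" by (rule e) (use xy in simp)
    moreover have "F p k y = Gk k ((1-p)*y)" by (rule e) (use xy in simp)
    ultimately show ?thesis by simp
  qed
  show "0 \<le> F p k x \<and> F p k x \<le> 1" if x: "0 \<le> x" "x \<le> 1" for x
  proof -
    have "F p k x = Gk k ((1-p)*x)" by (rule e) (use x in simp)
    moreover have "0 \<le> Gk k ((1-p)*x) \<and> Gk k ((1-p)*x) \<le> 1"
      by (rule G_range[OF m1 kk]) (use r[OF x] in auto)
    ultimately show ?thesis by simp
  qed
qed

definition frac :: "(nat \<Rightarrow> nat set) \<Rightarrow> nat set \<Rightarrow> nat \<Rightarrow> real" where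
  "frac N R u = real (card (N u \<inter> R)) / real (card (N u))"

lemma frac_range: "finite (N u) \<Longrightarrow> 0 \<le> frac N R u \<and> frac N R u \<le> 1"
  unfolding frac_def by (cases "card (N u) = 0") (auto simp: divide_le_eq_1 card_mono)

lemma bool_pmf_eq: "pmf q True = r \<Longrightarrow> q = bernoulli_pmf r"
proof -
  assume q: "pmf q True = r"
  have r: "0 \<le> r" "r \<le> 1" using q pmf_le_1[of q True] by auto
  show ?thesis
  proof (rule pmf_eqI)
    fix b :: bool show "pmf q b = pmf (bernoulli_pmf r) b"
      using q r by (cases b) (simp_all add: pmf_False_conv_True)
  qed
qed

lemma pmf_sample_True:
  assumes N: "finite (N u)" "N u \<noteq> {}" and p: "0 \<le> p" "p \<le> 1"
  shows "pmf (sample_seen_R N p R u) True = (1-p) * frac N R u"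
proof -
  have inner: "pmf (bernoulli_pmf p \<bind> (\<lambda>c. return_pmf (\<not> c \<and> v \<in> R))) True = (if v \<in> R then 1 - p else 0)" for v
    using p by (simp add: pmf_bind integral_bernoulli_pmf pmf_return indicator_def)
  have "pmf (sample_seen_R N p R u) True = (\<Sum>v\<in>N u. (if v \<in> R then 1 - p else 0)) / real (card (N u))"
    unfolding sample_seen_R_def pmf_bind[of "pmf_of_set (N u)"] inner
    using N by (simp add: integral_pmf_of_set)
  also have "(\<Sum>v\<in>N u. (if v \<in> R then 1 - p else 0)) = (1-p) * real (card (N u \<inter> R))"
  proof -
    have "(\<Sum>v\<in>N u. (if v \<in> R then 1 - p else 0)) = (\<Sum>v\<in>{v\<in>N u. v \<in> R}. 1 - p)"
      by (rule sum.inter_filter[OF N(1), symmetric])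
    also have "{v\<in>N u. v \<in> R} = N u \<inter> R" by auto
    finally show ?thesis by simp
  qed
  finally show ?thesis unfolding frac_def by simp
qed

lemma sample_bern:
  assumes N: "finite (N u)" "N u \<noteq> {}" and p: "0 \<le> p" "p \<le> 1"
  shows "sample_seen_R N p R u = bernoulli_pmf ((1-p) * frac N R u)"
  by (rule bool_pmf_eq) (rule pmf_sample_True[of N u p R, OF assms])

lemma node_update_bern:
  assumes k: "odd k" and N: "finite (N u)" "N u \<noteq> {}" and p: "0 \<le> p" "p \<le> 1"
  shows "node_update N k p R u = bernoulli_pmf (F p k (frac N R u))"
proof (rule bool_pmf_eq)
  define q where "q = (1-p) * frac N R u"
  have fr: "0 \<le> frac N R u" "frac N R u \<le> 1" using frac_range[of N u R] N by auto
  have "(1-p) * frac N R u \<le> 1" by (rule mult_le_one) (use p fr in auto)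
  then have q: "q \<in> {0..1}" using p fr unfolding q_def by auto
  have c: "card {i\<in>{..<k}. \<not> f i} = k - card {i\<in>{..<k}. f i}" for f :: "nat \<Rightarrow> bool"
  proof -
    have "{i\<in>{..<k}. \<not> f i} = {..<k} - {i\<in>{..<k}. f i}" by auto
    moreover have "card ({..<k} - {i\<in>{..<k}. f i}) = card {..<k} - card {i\<in>{..<k}. f i}"
      by (rule card_Diff_subset) auto
    ultimately show ?thesis by simp
  qed
  have "node_update N k p R u = map_pmf (\<lambda>f. card {i\<in>{..<k}. f i} > card {i\<in>{..<k}. \<not> f i})
       (Pi_pmf {..<k} False (\<lambda>_. bernoulli_pmf q))"
    unfolding node_update_def sample_bern[of N u p R, OF N p] q_def ..
  also have "\<dots> = map_pmf (\<lambda>f. card {i\<in>{..<k}. f i} > k - card {i\<in>{..<k}. f i})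
       (Pi_pmf {..<k} False (\<lambda>_. bernoulli_pmf q))"
    by (intro map_pmf_cong refl) (simp only: c)
  also have "\<dots> = map_pmf (\<lambda>c. c > k - c) (map_pmf (\<lambda>f. card {i\<in>{..<k}. f i}) (Pi_pmf {..<k} False (\<lambda>_. bernoulli_pmf q)))"
    by (simp only: map_pmf_comp o_def)
  also have "map_pmf (\<lambda>f. card {i\<in>{..<k}. f i}) (Pi_pmf {..<k} False (\<lambda>_. bernoulli_pmf q)) = binomial_pmf k q"
    by (rule binomial_pmf_altdef'[symmetric]) (use q in auto)
  finally have e: "node_update N k p R u = map_pmf (\<lambda>c. c > k - c) (binomial_pmf k q)" .
  have s: "(\<lambda>c. c > k - c) -` {True} = {j. real j \<ge> (real k + 1) / 2}"
  proof -
    obtain m where km: "k = 2*m+1" using k oddE by blast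
    have a: "(k - j < j) \<longleftrightarrow> m + 1 \<le> j" for j using km by linarith
    have b: "((real k + 1) / 2 \<le> real j) \<longleftrightarrow> m + 1 \<le> j" for j
    proof -
      have "(real k + 1) / 2 = real (m + 1)" using km by simp
      then show ?thesis by (simp only: of_nat_le_iff)
    qed
    show ?thesis using a b by auto
  qed
  show "pmf (node_update N k p R u) True = F p k (frac N R u)"
    unfolding e pmf_map s F_def q_def ..
qed

lemma expect_bool_ind: "measure_pmf.expectation (q :: bool pmf) (\<lambda>b. if b then 1 else 0 :: real) = pmf q True"
proof -
  have "q = bernoulli_pmf (pmf q True)" by (rule bool_pmf_eq) simp
  then have "measure_pmf.expectation q (\<lambda>b. if b then 1 else 0 :: real)
      = measure_pmf.expectation (bernoulli_pmf (pmf q True)) (\<lambda>b. if b then 1 else 0 :: real)" by simp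
  also have "\<dots> = pmf q True" by (simp add: integral_bernoulli_pmf pmf_le_1)
  finally show ?thesis .
qed

lemma hoeff_node:
  fixes D :: "nat \<Rightarrow> bool pmf" and A I :: "nat set"
  assumes A: "finite A" "I \<subseteq> A" "I \<noteq> {}" and e: "\<epsilon> \<ge> 0"
  shows "measure_pmf.prob (Pi_pmf A False D)
     {g. \<bar>real (card {v\<in>I. g v}) - (\<Sum>v\<in>I. pmf (D v) True)\<bar> \<ge> \<epsilon>} \<le> 2 * exp (-2 * \<epsilon>\<^sup>2 / real (card I))"
proof -
  let ?M = "measure_pmf (Pi_pmf A False D)"
  let ?X = "\<lambda>v (g :: nat \<Rightarrow> bool). if g v then 1 else (0::real)"
  have finI: "finite I" using A finite_subset by blast
  have ex: "measure_pmf.expectation (Pi_pmf A False D) (?X v) = pmf (D v) True" if v: "v \<in> I" for v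
  proof -
    have "measure_pmf.expectation (Pi_pmf A False D) (?X v)
        = measure_pmf.expectation (map_pmf (\<lambda>g. g v) (Pi_pmf A False D)) (\<lambda>b. if b then 1 else 0 :: real)"
      by simp
    also have "map_pmf (\<lambda>g. g v) (Pi_pmf A False D) = D v"
      using Pi_pmf_component[OF A(1), of v False D] v A by auto
    finally show ?thesis using expect_bool_ind by simp
  qed
  have ind0: "prob_space.indep_vars ?M (\<lambda>_. count_space UNIV) (\<lambda>x f. f x) A"
    by (rule indep_vars_Pi_pmf[OF A(1)])
  have ind1: "prob_space.indep_vars ?M (\<lambda>_. count_space UNIV) (\<lambda>x f. f x) I"
    by (rule prob_space.indep_vars_subset[OF measure_pmf.prob_space_axioms ind0 A(2)])
  have ind: "prob_space.indep_vars ?M (\<lambda>_. borel) ?X I"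
    using prob_space.indep_vars_compose2[OF measure_pmf.prob_space_axioms ind1, of "\<lambda>_ b. if b then 1 else (0::real)" "\<lambda>_. borel"]
    by simp
  interpret H: Hoeffding_ineq ?M I ?X "\<lambda>_. 0" "\<lambda>_. 1" "\<Sum>v\<in>I. measure_pmf.expectation (Pi_pmf A False D) (?X v)"
    by unfold_locales (use finI ind in auto)
  have "measure_pmf.prob (Pi_pmf A False D) {x \<in> space ?M. \<bar>(\<Sum>i\<in>I. ?X i x) - (\<Sum>v\<in>I. measure_pmf.expectation (Pi_pmf A False D) (?X v))\<bar> \<ge> \<epsilon>}
      \<le> 2 * exp (-2 * \<epsilon>\<^sup>2 / (\<Sum>i\<in>I. (1 - 0)\<^sup>2))"
    by (rule H.Hoeffding_ineq_abs_ge[OF e]) (use finI A in \<open>simp add: card_gt_0_iff\<close>)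
  moreover have "(\<Sum>i\<in>I. ?X i x) = real (card {v\<in>I. x v})" for x
  proof -
    have "(\<Sum>i\<in>I. ?X i x) = (\<Sum>i\<in>{v\<in>I. x v}. 1)"
      by (rule sum.inter_filter[OF finI, symmetric])
    then show ?thesis by simp
  qed
  moreover have "(\<Sum>v\<in>I. measure_pmf.expectation (Pi_pmf A False D) (?X v)) = (\<Sum>v\<in>I. pmf (D v) True)"
    by (rule sum.cong) (simp_all add: ex)
  moreover have "(\<Sum>i\<in>I. (1 - 0::real)\<^sup>2) = real (card I)" by simp
  ultimately show ?thesis by simp
qed

lemma graph_fin: "is_graph n N \<Longrightarrow> u \<in> {1..n} \<Longrightarrow> N u \<subseteq> {1..n} \<and> finite (N u)"
  unfolding is_graph_def by (meson finite_atLeastAtMost finite_subset)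

lemma em_step_eq:
  assumes G: "is_graph n N" and ne: "\<And>u. u \<in> {1..n} \<Longrightarrow> N u \<noteq> {}" and k: "odd k" and p: "0 \<le> p" "p \<le> 1"
  shows "em_step n N k p R = map_pmf (\<lambda>g. {u\<in>{1..n}. g u})
           (Pi_pmf {1..n} False (\<lambda>u. bernoulli_pmf (F p k (frac N R u))))"
proof -
  have "Pi_pmf {1..n} False (\<lambda>u. node_update N k p R u) = Pi_pmf {1..n} False (\<lambda>u. bernoulli_pmf (F p k (frac N R u)))"
  proof (rule Pi_pmf_cong)
    fix u assume u: "u \<in> {1..n}"
    show "node_update N k p R u = bernoulli_pmf (F p k (frac N R u))"
      by (rule node_update_bern[OF k _ _ p]) (use graph_fin[OF G u] ne[OF u] in auto)
  qed auto
  then show ?thesis unfolding em_step_def by simp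
qed

lemma step_bound:
  fixes d :: nat
  assumes G: "is_graph n N" and deg: "\<And>u. u \<in> {1..n} \<Longrightarrow> d \<le> card (N u)" and d: "d > 0"
    and k: "odd k" "k \<ge> 3" and p: "0 \<le> p" "p \<le> 1"
    and lohi: "0 \<le> lo" "hi \<le> 1"
    and R: "\<And>v. v \<in> {1..n} \<Longrightarrow> lo \<le> frac N R v \<and> frac N R v \<le> hi"
    and e: "\<epsilon> > 0"
  shows "measure_pmf.prob (em_step n N k p R)
           {R'. \<exists>u\<in>{1..n}. frac N R' u < F p k lo - \<epsilon> \<or> frac N R' u > F p k hi + \<epsilon>}
         \<le> real n * (2 * exp (-2 * \<epsilon>\<^sup>2 * real d))"
proof -
  have fin: "N u \<subseteq> {1..n}" "finite (N u)" if "u \<in> {1..n}" for u using graph_fin[OF G that] by auto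
  have ne: "N u \<noteq> {}" if "u \<in> {1..n}" for u using deg[OF that] d by auto
  have cpos: "real (card (N u)) > 0" if "u \<in> {1..n}" for u using deg[OF that] d by simp
  define D where "D u = bernoulli_pmf (F p k (frac N R u))" for u
  define S where "S g = {u\<in>{1..n}. g u}" for g :: "nat \<Rightarrow> bool"
  define B where "B u = {g. \<bar>real (card {v\<in>N u. g v}) - (\<Sum>v\<in>N u. pmf (D v) True)\<bar> \<ge> \<epsilon> * real (card (N u))}" for u
  have Fr: "0 \<le> F p k x \<and> F p k x \<le> 1" if "0 \<le> x" "x \<le> 1" for x
    using F_props(3)[OF k p that] .
  have pD: "pmf (D v) True = F p k (frac N R v)" if "v \<in> {1..n}" for v
  proof -
    have "0 \<le> frac N R v \<and> frac N R v \<le> 1" using frac_range fin[OF that] by blast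
    then show ?thesis unfolding D_def using Fr by simp
  qed
  have "measure_pmf.prob (em_step n N k p R)
           {R'. \<exists>u\<in>{1..n}. frac N R' u < F p k lo - \<epsilon> \<or> frac N R' u > F p k hi + \<epsilon>}
      = measure_pmf.prob (Pi_pmf {1..n} False D)
           (S -` {R'. \<exists>u\<in>{1..n}. frac N R' u < F p k lo - \<epsilon> \<or> frac N R' u > F p k hi + \<epsilon>})"
  proof -
    have "em_step n N k p R = map_pmf S (Pi_pmf {1..n} False D)"
      unfolding S_def[abs_def] D_def[abs_def] by (rule em_step_eq[OF G ne k(1) p])
    then show ?thesis by simp
  qed
  also have "\<dots> \<le> measure_pmf.prob (Pi_pmf {1..n} False D) (\<Union>u\<in>{1..n}. B u)"
  proof (rule measure_pmf.finite_measure_mono)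
    show "S -` {R'. \<exists>u\<in>{1..n}. frac N R' u < F p k lo - \<epsilon> \<or> frac N R' u > F p k hi + \<epsilon>} \<subseteq> (\<Union>u\<in>{1..n}. B u)"
    proof
      fix g assume "g \<in> S -` {R'. \<exists>u\<in>{1..n}. frac N R' u < F p k lo - \<epsilon> \<or> frac N R' u > F p k hi + \<epsilon>}"
      then obtain u where u: "u \<in> {1..n}" and bad: "frac N (S g) u < F p k lo - \<epsilon> \<or> frac N (S g) u > F p k hi + \<epsilon>"
        by auto
      define c where "c = real (card {v\<in>N u. g v})"
      define \<delta> where "\<delta> = real (card (N u))"
      define \<mu> where "\<mu> = (\<Sum>v\<in>N u. pmf (D v) True)"
      have dp: "\<delta> > 0" using cpos[OF u] by (simp add: \<delta>_def)
      have "N u \<inter> S g = {v\<in>N u. g v}" using fin[OF u] unfolding S_def by auto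
      then have fr: "frac N (S g) u = c / \<delta>" unfolding frac_def c_def \<delta>_def by simp
      have mu_eq: "\<mu> = (\<Sum>v\<in>N u. F p k (frac N R v))"
        unfolding \<mu>_def by (rule sum.cong) (use fin[OF u] pD in auto)
      have lo_le: "\<delta> * F p k lo \<le> \<mu>"
      proof -
        have "(\<Sum>v\<in>N u. F p k lo) \<le> (\<Sum>v\<in>N u. F p k (frac N R v))"
        proof (rule sum_mono)
          fix v assume v: "v \<in> N u"
          then have v': "v \<in> {1..n}" using fin[OF u] by auto
          show "F p k lo \<le> F p k (frac N R v)"
            by (rule F_props(2)[OF k p]) (use R[OF v'] lohi frac_range[of N v R] fin[OF v'] in auto)
        qed
        then show ?thesis unfolding mu_eq \<delta>_def by simp
      qed
      have hi_ge: "\<mu> \<le> \<delta> * F p k hi"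
      proof -
        have "(\<Sum>v\<in>N u. F p k (frac N R v)) \<le> (\<Sum>v\<in>N u. F p k hi)"
        proof (rule sum_mono)
          fix v assume v: "v \<in> N u"
          then have v': "v \<in> {1..n}" using fin[OF u] by auto
          show "F p k (frac N R v) \<le> F p k hi"
            by (rule F_props(2)[OF k p]) (use R[OF v'] lohi frac_range[of N v R] fin[OF v'] in auto)
        qed
        then show ?thesis unfolding mu_eq \<delta>_def by simp
      qed
      have "\<bar>c - \<mu>\<bar> \<ge> \<epsilon> * \<delta>"
        using bad
      proof
        assume "frac N (S g) u < F p k lo - \<epsilon>"
        then have "c < \<delta> * (F p k lo - \<epsilon>)" using dp unfolding fr by (simp add: field_simps)
        then show ?thesis using lo_le by (simp add: algebra_simps)
      next
        assume "frac N (S g) u > F p k hi + \<epsilon>"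
        then have "c > \<delta> * (F p k hi + \<epsilon>)" using dp unfolding fr by (simp add: field_simps)
        then show ?thesis using hi_ge by (simp add: algebra_simps)
      qed
      then have "g \<in> B u" unfolding B_def c_def \<mu>_def \<delta>_def by simp
      then show "g \<in> (\<Union>u\<in>{1..n}. B u)" using u by blast
    qed
  qed auto
  also have "\<dots> \<le> (\<Sum>u\<in>{1..n}. measure_pmf.prob (Pi_pmf {1..n} False D) (B u))"
    by (rule measure_UNION_le) auto
  also have "\<dots> \<le> (\<Sum>u\<in>{1..n}. 2 * exp (-2 * \<epsilon>\<^sup>2 * real d))"
  proof (rule sum_mono)
    fix u assume u: "u \<in> {1..n}"
    have "measure_pmf.prob (Pi_pmf {1..n} False D) (B u) \<le> 2 * exp (-2 * (\<epsilon> * real (card (N u)))\<^sup>2 / real (card (N u)))"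
      unfolding B_def by (rule hoeff_node) (use fin[OF u] ne[OF u] e in auto)
    also have "-2 * (\<epsilon> * real (card (N u)))\<^sup>2 / real (card (N u)) = -2 * \<epsilon>\<^sup>2 * real (card (N u))"
      using cpos[OF u] by (simp add: power2_eq_square)
    also have "\<dots> \<le> -2 * \<epsilon>\<^sup>2 * real d"
      using deg[OF u] e by simp
    finally show "measure_pmf.prob (Pi_pmf {1..n} False D) (B u) \<le> 2 * exp (-2 * \<epsilon>\<^sup>2 * real d)"
      by (smt (verit) exp_le_cancel_iff)
  qed
  also have "\<dots> = real n * (2 * exp (-2 * \<epsilon>\<^sup>2 * real d))" by simp
  finally show ?thesis .
qed

lemma traj_len: "xs \<in> set_pmf (em_traj n N k p M) \<Longrightarrow> length xs = Suc M"
  by (induction M arbitrary: xs) auto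

lemma traj_bound:
  fixes Good :: "nat \<Rightarrow> nat set \<Rightarrow> bool"
  assumes G0: "Good 0 {1..n}"
    and step: "\<And>t R. Good t R \<Longrightarrow> measure_pmf.prob (em_step n N k p R) {R'. \<not> Good (Suc t) R'} \<le> \<beta>"
    and b: "\<beta> \<ge> 0"
  shows "emeasure (measure_pmf (em_traj n N k p M)) {xs. \<exists>t\<le>M. \<not> Good t (xs!t)} \<le> ennreal (real M * \<beta>)"
proof (induction M)
  case 0
  have "{xs. \<exists>t\<le>0. \<not> Good t (xs!t)} \<inter> set_pmf (em_traj n N k p 0) = {}" using G0 by auto
  then have "emeasure (measure_pmf (em_traj n N k p 0)) {xs. \<exists>t\<le>0. \<not> Good t (xs!t)} = 0"
    by (metis emeasure_Int_set_pmf emeasure_empty inf_commute)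
  then show ?case by simp
next
  case (Suc M)
  define P where "P = em_traj n N k p M"
  define Bad where "Bad M = {xs. \<exists>t\<le>M. \<not> Good t (xs!t)}" for M
  have step': "emeasure (measure_pmf (em_step n N k p R)) {R'. \<not> Good (Suc t) R'} \<le> ennreal \<beta>" if "Good t R" for t R
    using step[OF that] by (simp add: measure_pmf.emeasure_eq_measure ennreal_leI)
  have pt: "emeasure (measure_pmf (map_pmf (\<lambda>y. xs @ [y]) (em_step n N k p (last xs)))) (Bad (Suc M))
       \<le> indicator (Bad M) xs + ennreal \<beta>" if xs: "xs \<in> set_pmf P" for xs
  proof -
    have len: "length xs = Suc M" using traj_len xs unfolding P_def by blast
    have nth: "(xs @ [y]) ! t = (if t \<le> M then xs ! t else y)" if "t \<le> Suc M" for t y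
      using len that by (auto simp: nth_append)
    show ?thesis
    proof (cases "xs \<in> Bad M")
      case True
      have "emeasure (measure_pmf (map_pmf (\<lambda>y. xs @ [y]) (em_step n N k p (last xs)))) (Bad (Suc M)) \<le> 1"
        by (simp add: measure_pmf.emeasure_le_1)
      then show ?thesis using True by (simp add: add_increasing2)
    next
      case False
      then have good: "\<And>t. t \<le> M \<Longrightarrow> Good t (xs!t)" unfolding Bad_def by auto
      have lastx: "last xs = xs ! M"
      proof -
        have "xs \<noteq> []" using len by auto
        then show ?thesis using len by (simp add: last_conv_nth)
      qed
      have pre: "(\<lambda>y. xs @ [y]) -` Bad (Suc M) = {R'. \<not> Good (Suc M) R'}"
      proof (intro set_eqI iffI)
        fix y assume "y \<in> (\<lambda>y. xs @ [y]) -` Bad (Suc M)"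
        then obtain t where t: "t \<le> Suc M" "\<not> Good t ((xs @ [y]) ! t)" unfolding Bad_def by auto
        show "y \<in> {R'. \<not> Good (Suc M) R'}"
        proof (cases "t \<le> M")
          case True then show ?thesis using t nth good by auto
        next
          case False then have "t = Suc M" using t by simp
          then show ?thesis using t nth by auto
        qed
      next
        fix y assume "y \<in> {R'. \<not> Good (Suc M) R'}"
        then have "\<not> Good (Suc M) ((xs @ [y]) ! Suc M)" using nth[of "Suc M" y] by simp
        then show "y \<in> (\<lambda>y. xs @ [y]) -` Bad (Suc M)" unfolding Bad_def by blast
      qed
      have "emeasure (measure_pmf (map_pmf (\<lambda>y. xs @ [y]) (em_step n N k p (last xs)))) (Bad (Suc M))
          = emeasure (measure_pmf (em_step n N k p (last xs))) {R'. \<not> Good (Suc M) R'}"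
        by (simp add: emeasure_map_pmf pre)
      also have "\<dots> \<le> ennreal \<beta>" using step'[of M "last xs"] good[of M] lastx by simp
      finally show ?thesis by (simp add: add_increasing)
    qed
  qed
  have "emeasure (measure_pmf (em_traj n N k p (Suc M))) (Bad (Suc M))
      = (\<integral>\<^sup>+xs. emeasure (measure_pmf (map_pmf (\<lambda>y. xs @ [y]) (em_step n N k p (last xs)))) (Bad (Suc M)) \<partial>measure_pmf P)"
    by (simp add: P_def)
  also have "\<dots> \<le> (\<integral>\<^sup>+xs. indicator (Bad M) xs + ennreal \<beta> \<partial>measure_pmf P)"
    by (rule nn_integral_mono_AE) (rule AE_pmfI, rule pt)
  also have "\<dots> = emeasure (measure_pmf P) (Bad M) + ennreal \<beta>"
    by (subst nn_integral_add) (auto simp: measure_pmf.emeasure_space_1)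
  also have "\<dots> \<le> ennreal (real M * \<beta>) + ennreal \<beta>"
    using Suc.IH unfolding P_def Bad_def by (intro add_right_mono) simp
  also have "\<dots> = ennreal (real (Suc M) * \<beta>)"
    using b by (simp add: ennreal_plus[symmetric] algebra_simps del: ennreal_plus)
  finally show ?case unfolding Bad_def .
qed

lemma traj_bound':
  fixes Good :: "nat \<Rightarrow> nat set \<Rightarrow> bool"
  assumes G0: "Good 0 {1..n}"
    and step: "\<And>t R. Good t R \<Longrightarrow> measure_pmf.prob (em_step n N k p R) {R'. \<not> Good (Suc t) R'} \<le> \<beta>"
    and b: "\<beta> \<ge> 0"
  shows "measure_pmf.prob (em_traj n N k p M) {xs. \<forall>t\<le>M. Good t (xs!t)} \<ge> 1 - real M * \<beta>"
proof -
  have "measure_pmf.prob (em_traj n N k p M) {xs. \<exists>t\<le>M. \<not> Good t (xs!t)} \<le> real M * \<beta>"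
    using traj_bound[OF assms, of M] b by (simp add: measure_pmf.emeasure_eq_measure)
  moreover have "measure_pmf.prob (em_traj n N k p M) {xs. \<forall>t\<le>M. Good t (xs!t)}
     = 1 - measure_pmf.prob (em_traj n N k p M) {xs. \<exists>t\<le>M. \<not> Good t (xs!t)}"
  proof -
    have "{xs. \<forall>t\<le>M. Good t (xs!t)} = UNIV - {xs. \<exists>t\<le>M. \<not> Good t (xs!t)}" by auto
    then show ?thesis
      using measure_pmf.prob_compl[of "{xs. \<exists>t\<le>M. \<not> Good t (xs!t)}" "em_traj n N k p M"] by simp
  qed
  ultimately show ?thesis by simp
qed

lemma double_count:
  assumes G: "is_graph n N" and R: "R \<subseteq> {1..n}"
  shows "(\<Sum>u\<in>{1..n}. real (card (N u \<inter> R))) = vol N R"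
proof -
  have finR: "finite R" using R finite_subset by blast
  have c: "real (card (N u \<inter> R)) = (\<Sum>v\<in>R. if v \<in> N u then 1 else 0)" for u
  proof -
    have "(\<Sum>v\<in>R. if v \<in> N u then 1 else (0::real)) = (\<Sum>v\<in>{v\<in>R. v \<in> N u}. 1)"
      by (rule sum.inter_filter[OF finR, symmetric])
    also have "{v\<in>R. v \<in> N u} = N u \<inter> R" by auto
    finally show ?thesis by simp
  qed
  have sym: "{u\<in>{1..n}. v \<in> N u} = N v" if v: "v \<in> R" for v
  proof -
    have v': "v \<in> {1..n}" using v R by auto
    show ?thesis using G v' unfolding is_graph_def by blast
  qed
  have "(\<Sum>u\<in>{1..n}. real (card (N u \<inter> R))) = (\<Sum>u\<in>{1..n}. \<Sum>v\<in>R. if v \<in> N u then 1 else (0::real))"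
    by (simp only: c)
  also have "\<dots> = (\<Sum>v\<in>R. \<Sum>u\<in>{1..n}. if v \<in> N u then 1 else (0::real))"
    by (rule sum.swap)
  also have "\<dots> = (\<Sum>v\<in>R. real (card (N v)))"
  proof (rule sum.cong[OF refl])
    fix v assume v: "v \<in> R"
    have "(\<Sum>u\<in>{1..n}. if v \<in> N u then 1 else (0::real)) = (\<Sum>u\<in>{u\<in>{1..n}. v \<in> N u}. 1)"
      by (rule sum.inter_filter[symmetric]) simp
    then show "(\<Sum>u\<in>{1..n}. if v \<in> N u then 1 else (0::real)) = real (card (N v))"
      using sym[OF v] by simp
  qed
  finally show ?thesis unfolding vol_def degree_def .
qed

lemma vol_ratio:
  assumes G: "is_graph n N" and R: "R \<subseteq> {1..n}"
    and ne: "\<And>u. u \<in> {1..n} \<Longrightarrow> N u \<noteq> {}" and n: "n \<ge> 1"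
    and b: "\<And>u. u \<in> {1..n} \<Longrightarrow> lo \<le> frac N R u \<and> frac N R u \<le> hi"
  shows "lo \<le> vol N R / vol N {1..n} \<and> vol N R / vol N {1..n} \<le> hi"
proof -
  have fin: "finite (N u)" if "u \<in> {1..n}" for u using graph_fin[OF G that] by auto
  have dpos: "real (card (N u)) > 0" if "u \<in> {1..n}" for u using fin[OF that] ne[OF that] by (simp add: card_gt_0_iff)
  have cu: "real (card (N u \<inter> R)) = real (card (N u)) * frac N R u" if "u \<in> {1..n}" for u
    using dpos[OF that] unfolding frac_def by simp
  have V: "vol N {1..n} = (\<Sum>u\<in>{1..n}. real (card (N u)))" unfolding vol_def degree_def ..
  have Vp: "vol N {1..n} > 0" unfolding V using dpos n by (intro sum_pos) auto
  have VR: "vol N R = (\<Sum>u\<in>{1..n}. real (card (N u)) * frac N R u)"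
    unfolding double_count[OF G R, symmetric] by (rule sum.cong) (simp_all add: cu)
  have "lo * vol N {1..n} \<le> vol N R"
    unfolding V VR sum_distrib_left
    by (rule sum_mono) (use b dpos in \<open>simp add: mult.commute mult_left_mono\<close>)
  moreover have "vol N R \<le> hi * vol N {1..n}"
    unfolding V VR sum_distrib_left
    by (rule sum_mono) (use b dpos in \<open>simp add: mult.commute mult_left_mono\<close>)
  ultimately show ?thesis using Vp by (simp add: field_simps)
qed

lemma frac_full: "is_graph n N \<Longrightarrow> u \<in> {1..n} \<Longrightarrow> N u \<noteq> {} \<Longrightarrow> frac N {1..n} u = 1"
  using graph_fin[of n N u] unfolding frac_def by (simp add: Int_absorb2)

lemma frac_le1: "is_graph n N \<Longrightarrow> u \<in> {1..n} \<Longrightarrow> frac N R u \<le> 1"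
  using graph_fin[of n N u] frac_range[of N u R] by auto

lemma main_n:
  fixes hi :: "nat \<Rightarrow> real" and d :: nat
  assumes G: "is_graph n N" and deg: "\<And>u. u \<in> {1..n} \<Longrightarrow> d \<le> card (N u)" and d: "d > 0"
    and k: "odd k" "k \<ge> 3" and p: "0 \<le> p" "p \<le> 1"
    and a: "0 \<le> a" "a \<le> 1" and Fa: "a \<le> F p k a - \<epsilon>" and e: "\<epsilon> > 0"
    and hi: "\<And>t. hi t \<le> 1" "hi 0 = 1" "\<And>t. min 1 (F p k (hi t) + \<epsilon>) \<le> hi (Suc t)"
  shows "measure_pmf.prob (em_traj n N k p M)
      {xs. \<forall>t\<le>M. xs!t \<subseteq> {1..n} \<and> (\<forall>u\<in>{1..n}. a \<le> frac N (xs!t) u \<and> frac N (xs!t) u \<le> hi t)}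
      \<ge> 1 - real M * (real n * (2 * exp (-2 * \<epsilon>\<^sup>2 * real d)))"
proof (rule traj_bound')
  define Good where "Good t R = (R \<subseteq> {1..n} \<and> (\<forall>u\<in>{1..n}. a \<le> frac N R u \<and> frac N R u \<le> hi t))" for t R
  have ne: "N u \<noteq> {}" if "u \<in> {1..n}" for u using deg[OF that] d by auto
  show "{1..n} \<subseteq> {1..n} \<and> (\<forall>u\<in>{1..n}. a \<le> frac N {1..n} u \<and> frac N {1..n} u \<le> hi 0)"
    using frac_full[OF G _ ne] a hi(2) by auto
  show "0 \<le> real n * (2 * exp (-2 * \<epsilon>\<^sup>2 * real d))" by simp
  fix t R assume gR: "R \<subseteq> {1..n} \<and> (\<forall>u\<in>{1..n}. a \<le> frac N R u \<and> frac N R u \<le> hi t)"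
  let ?E = "{R'. \<not> (R' \<subseteq> {1..n} \<and> (\<forall>u\<in>{1..n}. a \<le> frac N R' u \<and> frac N R' u \<le> hi (Suc t)))}"
  let ?B = "{R'. \<exists>u\<in>{1..n}. frac N R' u < F p k a - \<epsilon> \<or> frac N R' u > F p k (hi t) + \<epsilon>}"
  have sp: "set_pmf (em_step n N k p R) \<subseteq> {R'. R' \<subseteq> {1..n}}"
    unfolding em_step_def by auto
  have sub: "?E \<inter> set_pmf (em_step n N k p R) \<subseteq> ?B"
  proof
    fix R' assume R': "R' \<in> ?E \<inter> set_pmf (em_step n N k p R)"
    then have R'sub: "R' \<subseteq> {1..n}" using sp by auto
    show "R' \<in> ?B"
    proof (rule ccontr)
      assume nb: "R' \<notin> ?B"
      have "\<forall>u\<in>{1..n}. a \<le> frac N R' u \<and> frac N R' u \<le> hi (Suc t)"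
      proof
        fix u assume u: "u \<in> {1..n}"
        have "\<not> (frac N R' u < F p k a - \<epsilon> \<or> frac N R' u > F p k (hi t) + \<epsilon>)" using nb u by blast
        then have f1: "F p k a - \<epsilon> \<le> frac N R' u" "frac N R' u \<le> F p k (hi t) + \<epsilon>" by auto
        have f2: "frac N R' u \<le> 1" by (rule frac_le1[OF G u])
        have "frac N R' u \<le> min 1 (F p k (hi t) + \<epsilon>)" using f1 f2 by simp
        then show "a \<le> frac N R' u \<and> frac N R' u \<le> hi (Suc t)" using f1 Fa hi(3)[of t] by linarith
      qed
      then show False using R' R'sub by auto
    qed
  qed
  have "measure_pmf.prob (em_step n N k p R) ?E = measure_pmf.prob (em_step n N k p R) (?E \<inter> set_pmf (em_step n N k p R))"
    by (simp add: measure_Int_set_pmf)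
  also have "\<dots> \<le> measure_pmf.prob (em_step n N k p R) ?B"
    by (rule measure_pmf.finite_measure_mono[OF sub]) simp
  also have "\<dots> \<le> real n * (2 * exp (-2 * \<epsilon>\<^sup>2 * real d))"
    by (rule step_bound[OF G deg d k p a(1) hi(1) _ e]) (use gR in auto)
  finally show "measure_pmf.prob (em_step n N k p R) ?E \<le> real n * (2 * exp (-2 * \<epsilon>\<^sup>2 * real d))" .
qed

lemma bound_algebra:
  fixes n T :: nat and K x :: real
  assumes n: "n \<ge> 1" and K: "K > 0" and x: "x \<le> real n powr (-(K+3))" and x0: "0 \<le> x"
  shows "real (max T (nat \<lfloor>real n powr K\<rfloor>)) * (real n * (2 * x)) \<le> 2 * (real T + 1) / (real n)^2"
proof -
  have np: "real n > 0" using n by simp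
  have M: "real (max T (nat \<lfloor>real n powr K\<rfloor>)) \<le> real T + real n powr K"
  proof -
    have f0: "0 \<le> \<lfloor>real n powr K\<rfloor>" by simp
    have "real (nat \<lfloor>real n powr K\<rfloor>) = real_of_int \<lfloor>real n powr K\<rfloor>" using f0 by simp
    also have "\<dots> \<le> real n powr K" by (rule of_int_floor_le)
    finally have fl: "real (nat \<lfloor>real n powr K\<rfloor>) \<le> real n powr K" .
    have "real (max T (nat \<lfloor>real n powr K\<rfloor>)) = max (real T) (real (nat \<lfloor>real n powr K\<rfloor>))"
      by (simp only: of_nat_max)
    also have "\<dots> \<le> real T + real n powr K"
    proof (rule max.boundedI)
      show "real T \<le> real T + real n powr K" by simp
      show "real (nat \<lfloor>real n powr K\<rfloor>) \<le> real T + real n powr K"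
        using fl of_nat_0_le_iff[of T] by linarith
    qed
    finally show ?thesis .
  qed
  have m2: "real n powr (-2) = 1 / (real n)^2"
  proof -
    have "real n powr (-2) = inverse (real n powr 2)" by (rule powr_minus)
    also have "real n powr 2 = (real n)^2" using np by (simp add: powr_numeral)
    finally show ?thesis by (simp add: divide_inverse)
  qed
  have e1: "real n * real n powr (-(K+3)) = real n powr (-(K+2))"
  proof -
    have "real n powr (-(K+2)) = real n powr (1 + (-(K+3)))"
      by (rule arg_cong[where f="\<lambda>e. real n powr e"]) simp
    also have "\<dots> = real n powr 1 * real n powr (-(K+3))" by (rule powr_add)
    also have "real n powr 1 = real n" using np by simp
    finally show ?thesis by simp
  qed
  have e2: "real n powr K * real n powr (-(K+2)) = 1 / (real n)^2"
  proof -
    have "real n powr K * real n powr (-(K+2)) = real n powr (K + (-(K+2)))" by (rule powr_add[symmetric])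
    also have "K + (-(K+2)) = -2" by simp
    finally show ?thesis using m2 by simp
  qed
  have e3: "real n powr (-(K+2)) \<le> 1 / (real n)^2"
  proof -
    have "real n powr (-(K+2)) \<le> real n powr (-2)"
      using n K by (intro powr_mono) auto
    also have "real n powr (-2) = 1 / (real n)^2" by (rule m2)
    finally show ?thesis .
  qed
  have "real (max T (nat \<lfloor>real n powr K\<rfloor>)) * (real n * (2 * x))
      \<le> (real T + real n powr K) * (real n * (2 * real n powr (-(K+3))))"
    using M x x0 np by (intro mult_mono) (auto intro: mult_left_mono)
  also have "\<dots> = 2 * (real T + real n powr K) * (real n * real n powr (-(K+3)))"
    by (simp only: mult_ac)
  also have "\<dots> = 2 * (real T + real n powr K) * real n powr (-(K+2))"
    by (simp only: e1)
  also have "\<dots> = 2 * (real T * real n powr (-(K+2)) + real n powr K * real n powr (-(K+2)))"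
    by (simp only: distrib_right mult.assoc)
  also have "\<dots> \<le> 2 * (real T * (1 / (real n)^2) + 1 / (real n)^2)"
  proof -
    have "real T * real n powr (-(K+2)) \<le> real T * (1 / (real n)^2)"
      by (rule mult_left_mono[OF e3]) simp
    then show ?thesis unfolding e2 by simp
  qed
  also have "\<dots> = 2 * (real T + 1) / (real n)^2" by (simp add: add_divide_distrib algebra_simps)
  finally show ?thesis .
qed

theorem corollary5p4:
  fixes Nb :: "nat \<Rightarrow> nat \<Rightarrow> nat set" and k :: nat and p :: real
  assumes graphs: "\<And>n. is_graph n (Nb n)"
    and mindeg: "(\<lambda>n. real (min_degree n (Nb n))) \<in> \<omega>(\<lambda>n. ln (real n))"
    and k_odd: "odd k" and k_ge: "k \<ge> 3"
    and p_nonneg: "0 \<le> p" and p_lt: "p < p_star k"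
  shows "\<forall>\<gamma>>0. \<exists>T::nat. \<forall>K::real>0.
    (\<lambda>n. measure_pmf.prob (em_traj n (Nb n) k p (max T (nat \<lfloor>real n powr K\<rfloor>)))
       {xs. (\<forall>t<T. vol (Nb n) (xs ! t) / vol (Nb n) {1..n} \<ge> phi_plus p k - \<gamma>) \<and>
            (\<forall>t. T \<le> t \<and> real t \<le> real n powr K \<longrightarrow>
               vol (Nb n) (xs ! t) / vol (Nb n) {1..n} \<in> {phi_plus p k - \<gamma> .. phi_plus p k + \<gamma>})})
    \<longlonglongrightarrow> 1"
proof (intro allI impI)
  fix \<gamma> :: real assume \<gamma>: "\<gamma> > 0"
  define \<phi> where "\<phi> = phi_plus p k"
  have AM: "p < 1/2 \<and> (\<exists>\<phi>m. 0 < \<phi>m \<and> \<phi>m < \<phi> \<and> \<phi> \<le> 1 \<and>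
     (\<forall>x. \<phi>m < x \<and> x < \<phi> \<longrightarrow> F p k x > x) \<and> (\<forall>x. \<phi> < x \<and> x \<le> 1 \<longrightarrow> F p k x < x))"
    unfolding \<phi>_def by (rule analytic_main[OF k_odd k_ge p_nonneg p_lt])
  then obtain \<phi>m where p12: "p < 1/2" and phm: "0 < \<phi>m" "\<phi>m < \<phi>" "\<phi> \<le> 1"
    and above: "\<And>x. \<phi>m < x \<Longrightarrow> x < \<phi> \<Longrightarrow> F p k x > x"
    and below: "\<And>x. \<phi> < x \<Longrightarrow> x \<le> 1 \<Longrightarrow> F p k x < x" by blast
  have p1: "p \<le> 1" using p12 by simp
  define a where "a = max ((\<phi>m + \<phi>)/2) (\<phi> - \<gamma>/2)"
  have a: "\<phi>m < a" "a < \<phi>" "\<phi> - \<gamma>/2 \<le> a" "0 < a" "a \<le> 1"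
    using phm \<gamma> unfolding a_def by (auto simp: max_def)
  have Fa: "F p k a > a" using above a by simp
  define b where "b = min 1 (\<phi> + \<gamma>/2)"
  have b: "\<phi> \<le> b" "b \<le> 1" "b \<le> \<phi> + \<gamma>" "0 < b" "a \<le> b"
    using phm \<gamma> a unfolding b_def by (auto simp: min_def)
  obtain \<eta> where \<eta>: "\<eta> > 0" and \<eta>p: "\<phi> < 1 \<Longrightarrow> \<forall>x\<in>{b..1}. F p k x \<le> x - \<eta>"
  proof (cases "\<phi> < 1")
    case True
    then have bphi: "\<phi> < b" unfolding b_def using \<gamma> by auto
    have cont: "continuous_on {b..1} (\<lambda>x. x - F p k x)"
      using continuous_on_subset[OF F_props(1)[OF k_odd k_ge p_nonneg p1], of "{b..1}"] b bphi phm
      by (intro continuous_intros) auto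
    obtain x0 where x0: "x0 \<in> {b..1}" and x0m: "\<And>y. y \<in> {b..1} \<Longrightarrow> x0 - F p k x0 \<le> y - F p k y"
      using continuous_attains_inf[OF compact_Icc _ cont] b by auto
    have "x0 - F p k x0 > 0" using below[of x0] x0 bphi by auto
    moreover have "\<forall>x\<in>{b..1}. F p k x \<le> x - (x0 - F p k x0)"
    proof
      fix x assume "x \<in> {b..1}"
      then have "x0 - F p k x0 \<le> x - F p k x" by (rule x0m)
      then show "F p k x \<le> x - (x0 - F p k x0)" by linarith
    qed
    ultimately show ?thesis by (intro that[of "x0 - F p k x0"]) auto
  next
    case False then show ?thesis by (intro that[of 1]) auto
  qed
  define \<epsilon> where "\<epsilon> = min ((F p k a - a)/2) (\<eta>/2)"
  have e1: "\<epsilon> \<le> (F p k a - a)/2" "\<epsilon> \<le> \<eta>/2" unfolding \<epsilon>_def by (rule min.cobounded1, rule min.cobounded2)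
  have e0: "\<epsilon> > 0" using Fa \<eta> unfolding \<epsilon>_def by simp
  have e3: "a \<le> F p k a - \<epsilon>"
  proof -
    have "\<epsilon> \<le> (F p k a - a)/2" by (rule e1(1))
    moreover have "a < F p k a" by (rule Fa)
    ultimately show ?thesis by (simp add: field_simps)
  qed
  have e: "\<epsilon> > 0" "\<epsilon> \<le> \<eta>/2" "a \<le> F p k a - \<epsilon>"
    using e0 e1 e3 by auto
  define hi where "hi t = max b (1 - real t * \<eta> / 2)" for t :: nat
  have hi1: "hi t \<le> 1" for t using b \<eta> unfolding hi_def by auto
  have hi0: "hi 0 = 1" using b unfolding hi_def by auto
  have hib: "b \<le> hi t" for t unfolding hi_def by auto
  have hstep: "min 1 (F p k (hi t) + \<epsilon>) \<le> hi (Suc t)" for t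
  proof (cases "\<phi> < 1")
    case True
    have "F p k (hi t) \<le> hi t - \<eta>" using \<eta>p[OF True] hi1[of t] hib[of t] by auto
    then have "F p k (hi t) + \<epsilon> \<le> hi t - \<eta>/2" using e by simp
    also have "hi t - \<eta>/2 \<le> hi (Suc t)"
    proof -
      have r: "1 - real (Suc t) * \<eta> / 2 = (1 - real t * \<eta> / 2) - \<eta>/2" by (simp add: algebra_simps)
      show ?thesis unfolding hi_def r using \<eta> by (auto simp: max_def)
    qed
    finally show ?thesis by simp
  next
    case False
    then have "\<phi> = 1" using phm by simp
    then have "b = 1" unfolding b_def using \<gamma> by simp
    then have "hi (Suc t) = 1" using hi1 hib by (metis order_antisym)
    then show ?thesis by simp
  qed
  define T where "T = nat \<lceil>2 / \<eta>\<rceil>"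
  have hiT: "hi t = b" if t: "T \<le> t" for t
  proof -
    have "2 / \<eta> \<le> real T" unfolding T_def by linarith
    also have "\<dots> \<le> real t" using t by simp
    finally have "2 \<le> real t * \<eta>" using \<eta> by (simp add: field_simps)
    then have "1 - real t * \<eta> / 2 \<le> b" using b by simp
    then show ?thesis unfolding hi_def by simp
  qed
  show "\<exists>T::nat. \<forall>K::real>0.
    (\<lambda>n. measure_pmf.prob (em_traj n (Nb n) k p (max T (nat \<lfloor>real n powr K\<rfloor>)))
       {xs. (\<forall>t<T. vol (Nb n) (xs ! t) / vol (Nb n) {1..n} \<ge> phi_plus p k - \<gamma>) \<and>
            (\<forall>t. T \<le> t \<and> real t \<le> real n powr K \<longrightarrow>
               vol (Nb n) (xs ! t) / vol (Nb n) {1..n} \<in> {phi_plus p k - \<gamma> .. phi_plus p k + \<gamma>})})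
    \<longlonglongrightarrow> 1"
  proof (intro exI[of _ T] allI impI)
    fix K :: real assume K: "K > 0"
    define P where "P n = measure_pmf.prob (em_traj n (Nb n) k p (max T (nat \<lfloor>real n powr K\<rfloor>)))
       {xs. (\<forall>t<T. vol (Nb n) (xs ! t) / vol (Nb n) {1..n} \<ge> phi_plus p k - \<gamma>) \<and>
            (\<forall>t. T \<le> t \<and> real t \<le> real n powr K \<longrightarrow>
               vol (Nb n) (xs ! t) / vol (Nb n) {1..n} \<in> {phi_plus p k - \<gamma> .. phi_plus p k + \<gamma>})}" for n
    define C where "C = (K + 3) / (2 * \<epsilon>\<^sup>2)"
    have C: "C > 0" using K e by (simp add: C_def)
    have ev1: "eventually (\<lambda>n. norm (real (min_degree n (Nb n))) \<ge> C * norm (ln (real n))) sequentially"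
      using smallomegaD[OF mindeg, of C] by simp
    have ev2: "eventually (\<lambda>n::nat. n \<ge> 2) sequentially" by (rule eventually_ge_at_top)
    have key: "eventually (\<lambda>n. 1 - 2 * (real T + 1) / (real n)^2 \<le> P n) sequentially"
      using ev1 ev2
    proof eventually_elim
      case (elim n)
      define N where "N = Nb n"
      define d where "d = min_degree n N"
      define M where "M = max T (nat \<lfloor>real n powr K\<rfloor>)"
      have G: "is_graph n N" unfolding N_def by (rule graphs)
      have lnp: "ln (real n) > 0" using elim by simp
      have dC: "real d \<ge> C * ln (real n)" using elim lnp unfolding d_def N_def by simp
      have dpos: "real d > 0" using dC C lnp by (smt (verit) mult_pos_pos)
      then have d0: "d > 0" by simp
      have deg: "d \<le> card (N u)" if u: "u \<in> {1..n}" for u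
      proof -
        have "finite (degree N ` {1..n})" by simp
        then have "Min (degree N ` {1..n}) \<le> degree N u" using u by (intro Min_le) auto
        then show ?thesis unfolding d_def min_degree_def degree_def by simp
      qed
      have ne: "N u \<noteq> {}" if "u \<in> {1..n}" for u using deg[OF that] d0 by auto
      define Good where "Good t R = (R \<subseteq> {1..n} \<and> (\<forall>u\<in>{1..n}. a \<le> frac N R u \<and> frac N R u \<le> hi t))" for t R
      have mn: "measure_pmf.prob (em_traj n N k p M) {xs. \<forall>t\<le>M. Good t (xs!t)}
          \<ge> 1 - real M * (real n * (2 * exp (-2 * \<epsilon>\<^sup>2 * real d)))"
        unfolding Good_def
        by (rule main_n[OF G deg d0 k_odd k_ge p_nonneg p1 _ a(5) e(3) e(1) hi1 hi0 hstep]) (use a in auto)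
      have sub: "{xs. \<forall>t\<le>M. Good t (xs!t)} \<subseteq>
         {xs. (\<forall>t<T. vol N (xs ! t) / vol N {1..n} \<ge> \<phi> - \<gamma>) \<and>
            (\<forall>t. T \<le> t \<and> real t \<le> real n powr K \<longrightarrow>
               vol N (xs ! t) / vol N {1..n} \<in> {\<phi> - \<gamma> .. \<phi> + \<gamma>})}"
      proof
        fix xs assume "xs \<in> {xs. \<forall>t\<le>M. Good t (xs!t)}"
        then have g: "Good t (xs!t)" if "t \<le> M" for t using that by auto
        have vr: "a \<le> vol N (xs!t) / vol N {1..n} \<and> vol N (xs!t) / vol N {1..n} \<le> hi t" if "t \<le> M" for t
          using g[OF that] elim by (intro vol_ratio[OF G _ ne]) (auto simp: Good_def)
        have A: "vol N (xs ! t) / vol N {1..n} \<ge> \<phi> - \<gamma>" if t: "t < T" for t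
        proof -
          have "t \<le> M" using t unfolding M_def by simp
          then show ?thesis using vr a \<gamma> by fastforce
        qed
        have B: "vol N (xs ! t) / vol N {1..n} \<in> {\<phi> - \<gamma> .. \<phi> + \<gamma>}"
          if t: "T \<le> t" "real t \<le> real n powr K" for t
        proof -
          have "t \<le> nat \<lfloor>real n powr K\<rfloor>" using t by (simp add: le_nat_floor)
          then have "t \<le> M" unfolding M_def by simp
          then have "a \<le> vol N (xs!t) / vol N {1..n} \<and> vol N (xs!t) / vol N {1..n} \<le> b"
            using vr hiT[OF t(1)] by metis
          then show ?thesis using a b \<gamma> by auto
        qed
        show "xs \<in> {xs. (\<forall>t<T. vol N (xs ! t) / vol N {1..n} \<ge> \<phi> - \<gamma>) \<and>
            (\<forall>t. T \<le> t \<and> real t \<le> real n powr K \<longrightarrow>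
               vol N (xs ! t) / vol N {1..n} \<in> {\<phi> - \<gamma> .. \<phi> + \<gamma>})}"
          using A B by blast
      qed
      have Pn: "P n \<ge> 1 - real M * (real n * (2 * exp (-2 * \<epsilon>\<^sup>2 * real d)))"
      proof -
        have "measure_pmf.prob (em_traj n N k p M) {xs. \<forall>t\<le>M. Good t (xs!t)} \<le> P n"
          unfolding P_def N_def[symmetric] M_def[symmetric] \<phi>_def[symmetric]
          by (rule measure_pmf.finite_measure_mono[OF sub]) simp
        then show ?thesis using mn by simp
      qed
      have ex: "exp (-2 * \<epsilon>\<^sup>2 * real d) \<le> real n powr (-(K+3))"
      proof -
        have "-2 * \<epsilon>\<^sup>2 * real d \<le> -2 * \<epsilon>\<^sup>2 * (C * ln (real n))"
          using dC e by (simp add: mult_le_cancel_left)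
        also have "-2 * \<epsilon>\<^sup>2 * (C * ln (real n)) = -(K+3) * ln (real n)"
          using e unfolding C_def by (simp add: field_simps)
        finally have "exp (-2 * \<epsilon>\<^sup>2 * real d) \<le> exp (-(K+3) * ln (real n))" by simp
        also have "exp (-(K+3) * ln (real n)) = real n powr (-(K+3))"
          using elim by (simp add: powr_def)
        finally show ?thesis .
      qed
      have "real M * (real n * (2 * exp (-2 * \<epsilon>\<^sup>2 * real d))) \<le> 2 * (real T + 1) / (real n)^2"
        unfolding M_def by (rule bound_algebra) (use elim K ex in auto)
      then show ?case using Pn by simp
    qed
    have lim: "(\<lambda>n. 1 - 2 * (real T + 1) / (real n)^2) \<longlonglongrightarrow> 1" by real_asymp
    have up: "eventually (\<lambda>n. P n \<le> 1) sequentially" by (simp add: P_def)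
    show "P \<longlonglongrightarrow> 1"
      by (rule tendsto_sandwich[OF key up lim tendsto_const])
  qed
qed

end
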